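(* Let $p\in(0,1)$ and let $\{X_n,n\geq1\}$ be a $\varphi$-mixing sequence of random variables with common marginal distribution function $F$, whose mixing coefficients satisfy $\sum_{n=1}^\infty\varphi^{1/2}(n)<\infty$. Let $\xi_p=\inf\{x:F(x)\geq p\}$ and $\xi_{p,n}=\inf\{x:F_n(x)\geq p\}$. Assume that $F$ is differentiable at $\xi_p$ with $F'(\xi_p)=f(\xi_p)>0$, and that $f'$ (the derivative of the density $f=F'$) is bounded in a neighborhood $\mathscr{N}_p$ of $\xi_p$. Then for any $\delta>0$, with probability 1, $$|\xi_{p,n}-\xi_p|\leq\frac{(2\sqrt{C_3}+\delta)(\log n)^{1/2}}{f(\xi_p)\,n^{1/2}}\quad\text{for all } n\text{ sufficiently large},$$ where $C_3=4\big[1+4\sum_{n=1}^\infty\varphi^{1/2}(n)\big]$.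
   Context: All random variables are defined on a probability space $(\Omega,\mathcal{F},P)$. $F_n(x)=\frac1n\sum_{i=1}^n I(X_i\leq x)$ is the empirical distribution function of $X_1,\dots,X_n$. For $n\leq m$ let $\mathcal{F}_n^m=\sigma(X_i,n\leq i\leq m)$. For sub-$\sigma$-algebras $\mathcal{B},\mathcal{R}$ let $\varphi(\mathcal{B},\mathcal{R})=\sup_{A\in\mathcal{B},B\in\mathcal{R},P(A)>0}|P(B\mid A)-P(B)|$, and the mixing coefficients are $\varphi(n)=\sup_{k\geq1}\varphi(\mathcal{F}_1^k,\mathcal{F}_{k+n}^\infty)$. The sequence is called $\varphi$-mixing if $\varphi(n)\downarrow0$ as $n\to\infty$. *)

theory Defs
  imports "HOL-Probability.Probability"
begin

text \<open>Random variables are indexed from 1: X 1, X 2, ... (X 0 is ignored).\<close>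

definition gen_sigma :: "'a measure \<Rightarrow> (nat \<Rightarrow> 'a \<Rightarrow> real) \<Rightarrow> nat set \<Rightarrow> 'a set set" where
  "gen_sigma M X I = sigma_sets (space M) (\<Union>i\<in>I. {X i -` B \<inter> space M | B. B \<in> sets borel})"

definition phi_coef :: "'a measure \<Rightarrow> 'a set set \<Rightarrow> 'a set set \<Rightarrow> real" where
  "phi_coef M \<B> \<R> = Sup {\<bar>measure M (A \<inter> B) / measure M A - measure M B\<bar> | A B.
      A \<in> \<B> \<and> B \<in> \<R> \<and> measure M A > 0}"

definition phi_mix :: "'a measure \<Rightarrow> (nat \<Rightarrow> 'a \<Rightarrow> real) \<Rightarrow> nat \<Rightarrow> real" where
  "phi_mix M X n = (SUP k\<in>{1..}. phi_coef M (gen_sigma M X {1..k}) (gen_sigma M X {k+n..}))"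

definition phi_mixing :: "'a measure \<Rightarrow> (nat \<Rightarrow> 'a \<Rightarrow> real) \<Rightarrow> bool" where
  "phi_mixing M X \<longleftrightarrow> antimono (phi_mix M X) \<and> (phi_mix M X \<longlonglongrightarrow> 0)"

definition emp_df :: "(nat \<Rightarrow> 'a \<Rightarrow> real) \<Rightarrow> nat \<Rightarrow> 'a \<Rightarrow> real \<Rightarrow> real" where
  "emp_df X n \<omega> x = (1 / real n) * (\<Sum>i=1..n. if X i \<omega> \<le> x then 1 else 0)"

definition quantile :: "(real \<Rightarrow> real) \<Rightarrow> real \<Rightarrow> real" where
  "quantile G p = Inf {x. G x \<ge> p}"

end

theory Submission
  imports Defs
begin


definition sub :: "'a measure \<Rightarrow> (nat \<Rightarrow> 'a \<Rightarrow> real) \<Rightarrow> nat set \<Rightarrow> 'a measure" where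
  "sub M X I = sigma (space M) (gen_sigma M X I)"

lemma gen_sigma_pow: "gen_sigma M X I \<subseteq> Pow (space M)"
  unfolding gen_sigma_def
  apply (rule subsetI)
  apply (simp only: Pow_iff)
  apply (erule sigma_sets_into_sp[rotated])
  by auto

lemma space_sub[simp]: "space (sub M X I) = space M"
  unfolding sub_def by (simp add: space_measure_of_conv)

lemma sets_sub[simp]: "sets (sub M X I) = gen_sigma M X I"
proof -
  have "sets (sub M X I) = sigma_sets (space M) (gen_sigma M X I)"
    unfolding sub_def by (rule sets_measure_of[OF gen_sigma_pow])
  also have "\<dots> = gen_sigma M X I"
    unfolding gen_sigma_def by (rule sigma_sets_sigma_sets_eq) auto
  finally show ?thesis .
qed

lemma X_sub: "i \<in> I \<Longrightarrow> X i \<in> borel_measurable (sub M X I)"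
  by (rule measurableI) (auto simp: gen_sigma_def intro!: sigma_sets.Basic)

lemma gen_sigma_mono: "I \<subseteq> J \<Longrightarrow> gen_sigma M X I \<subseteq> gen_sigma M X J"
  unfolding gen_sigma_def by (rule sigma_sets_mono') blast

lemma sub_mono:
  fixes f :: "'a \<Rightarrow> 'b::topological_space"
  assumes "I \<subseteq> J" "f \<in> borel_measurable (sub M X I)" shows "f \<in> borel_measurable (sub M X J)"
proof (rule measurableI)
  fix A :: "'b set" assume "A \<in> sets borel"
  then have "f -` A \<inter> space (sub M X I) \<in> sets (sub M X I)" using assms by (intro measurable_sets) auto
  then show "f -` A \<inter> space (sub M X J) \<in> sets (sub M X J)"
    using gen_sigma_mono[OF \<open>I \<subseteq> J\<close>, of M X] by auto
qed auto

locale mix = prob_space M for M :: "'a measure" +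
  fixes X :: "nat \<Rightarrow> 'a \<Rightarrow> real"
  assumes Xm: "\<And>i. i \<ge> 1 \<Longrightarrow> X i \<in> borel_measurable M"
begin

lemma gen_sets: "I \<subseteq> {1..} \<Longrightarrow> gen_sigma M X I \<subseteq> sets M"
  unfolding gen_sigma_def
  apply (rule sets.sigma_sets_subset)
  using Xm by (auto intro: measurable_sets)

lemma sub_M:
  fixes f :: "'a \<Rightarrow> 'b::topological_space"
  assumes "I \<subseteq> {1..}" "f \<in> borel_measurable (sub M X I)" shows "f \<in> borel_measurable M"
proof (rule measurableI)
  fix A :: "'b set" assume "A \<in> sets borel"
  then have "f -` A \<inter> space (sub M X I) \<in> sets (sub M X I)" using assms by (intro measurable_sets) auto
  then show "f -` A \<inter> space M \<in> sets M"
    using gen_sets[OF \<open>I \<subseteq> {1..}\<close>] by auto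
qed auto

lemma phi_coef_le:
  assumes "\<B> \<subseteq> sets M" "\<R> \<subseteq> sets M" "A \<in> \<B>" "B \<in> \<R>" "prob A > 0"
  shows "\<bar>prob (A \<inter> B) / prob A - prob B\<bar> \<le> phi_coef M \<B> \<R>"
  unfolding phi_coef_def
proof (rule cSup_upper)
  show "\<bar>prob (A \<inter> B) / prob A - prob B\<bar> \<in> {\<bar>prob (A \<inter> B) / prob A - prob B\<bar> | A B.
      A \<in> \<B> \<and> B \<in> \<R> \<and> prob A > 0}" using assms by blast
  show "bdd_above {\<bar>prob (A \<inter> B) / prob A - prob B\<bar> | A B.
      A \<in> \<B> \<and> B \<in> \<R> \<and> prob A > 0}"
  proof (rule bdd_aboveI[of _ 1], clarify)
    fix A B assume h: "A \<in> \<B>" "B \<in> \<R>" "prob A > 0"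
    have "prob (A \<inter> B) \<le> prob A" using h assms by (intro finite_measure_mono) auto
    then have "prob (A \<inter> B) / prob A \<le> 1" "0 \<le> prob (A \<inter> B) / prob A" using h by auto
    moreover have "prob B \<le> 1" "0 \<le> prob B" by auto
    ultimately show "\<bar>prob (A \<inter> B) / prob A - prob B\<bar> \<le> 1" unfolding abs_le_iff by linarith
  qed
qed

lemma phi_coef_01:
  assumes "\<B> \<subseteq> sets M" "\<R> \<subseteq> sets M" "space M \<in> \<B>" "{} \<in> \<R>"
  shows "0 \<le> phi_coef M \<B> \<R>" "phi_coef M \<B> \<R> \<le> 1"
proof -
  have "\<bar>prob (space M \<inter> {}) / prob (space M) - prob {}\<bar> \<le> phi_coef M \<B> \<R>"
    using assms by (intro phi_coef_le) (auto simp: prob_space)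
  then show "0 \<le> phi_coef M \<B> \<R>" by simp
  show "phi_coef M \<B> \<R> \<le> 1"
    unfolding phi_coef_def
  proof (rule cSup_least)
    show "{\<bar>prob (A \<inter> B) / prob A - prob B\<bar> | A B. A \<in> \<B> \<and> B \<in> \<R> \<and> prob A > 0} \<noteq> {}"
    proof -
      have "0 \<in> {\<bar>prob (A \<inter> B) / prob A - prob B\<bar> | A B. A \<in> \<B> \<and> B \<in> \<R> \<and> prob A > 0}"
        using assms by (intro CollectI exI[of _ "space M"] exI[of _ "{}"]) (auto simp: prob_space)
      then show ?thesis by blast
    qed
  next
    fix y assume "y \<in> {\<bar>prob (A \<inter> B) / prob A - prob B\<bar> | A B. A \<in> \<B> \<and> B \<in> \<R> \<and> prob A > 0}"
    then obtain A B where h: "A \<in> \<B>" "B \<in> \<R>" "prob A > 0" and y: "y = \<bar>prob (A \<inter> B) / prob A - prob B\<bar>" by blast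
    have "prob (A \<inter> B) \<le> prob A" using h assms by (intro finite_measure_mono) auto
    then have "prob (A \<inter> B) / prob A \<le> 1" "0 \<le> prob (A \<inter> B) / prob A" using h by auto
    moreover have "prob B \<le> 1" "0 \<le> prob B" by auto
    ultimately show "y \<le> 1" using y unfolding abs_le_iff by linarith
  qed
qed

lemma space_gen: "space M \<in> gen_sigma M X I"
  unfolding gen_sigma_def by (rule sigma_sets_top)

lemma empty_gen: "{} \<in> gen_sigma M X I"
  unfolding gen_sigma_def by (rule sigma_sets.Empty)

lemma phi_coef_k_01:
  assumes "k \<ge> 1"
  shows "0 \<le> phi_coef M (gen_sigma M X {1..k}) (gen_sigma M X {k+g..})"
    "phi_coef M (gen_sigma M X {1..k}) (gen_sigma M X {k+g..}) \<le> 1"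
  using assms by (auto intro!: phi_coef_01 gen_sets space_gen empty_gen)

lemma phi_mix_ge: "k \<ge> 1 \<Longrightarrow> phi_coef M (gen_sigma M X {1..k}) (gen_sigma M X {k+g..}) \<le> phi_mix M X g"
  unfolding phi_mix_def
  apply (rule cSUP_upper)
   apply simp
  apply (rule bdd_aboveI2[where M=1])
  apply (rule phi_coef_k_01(2))
  by simp

lemma phi_mix_01: "0 \<le> phi_mix M X g" "phi_mix M X g \<le> 1"
proof -
  show "0 \<le> phi_mix M X g"
    using phi_mix_ge[of 1 g] phi_coef_k_01[of 1 g] by linarith
  show "phi_mix M X g \<le> 1"
    unfolding phi_mix_def
    apply (rule cSUP_least)
     apply simp
    apply (rule phi_coef_k_01(2))
    by simp
qed

lemma mix_ineq:
  assumes "k \<ge> 1" "A \<in> gen_sigma M X {1..k}" "B \<in> gen_sigma M X {k+g..}"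
  shows "\<bar>prob (A \<inter> B) - prob A * prob B\<bar> \<le> phi_mix M X g * prob A"
proof (cases "prob A > 0")
  case True
  have s: "gen_sigma M X {1..k} \<subseteq> sets M" "gen_sigma M X {k+g..} \<subseteq> sets M"
    using assms by (auto intro!: gen_sets)
  have "\<bar>prob (A \<inter> B) / prob A - prob B\<bar> \<le> phi_mix M X g"
    using phi_coef_le[OF s assms(2,3) True] phi_mix_ge[OF assms(1), of g] by linarith
  then have "\<bar>prob (A \<inter> B) / prob A - prob B\<bar> * prob A \<le> phi_mix M X g * prob A"
    using True by (intro mult_right_mono) auto
  also have "\<bar>prob (A \<inter> B) / prob A - prob B\<bar> * prob A = \<bar>prob (A \<inter> B) - prob A * prob B\<bar>"
    using True by (simp add: abs_mult[symmetric] field_simps)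
  finally show ?thesis .
next
  case False
  then have "prob A = 0" using measure_nonneg[of M A] by linarith
  moreover have "prob (A \<inter> B) \<le> prob A"
    using assms gen_sets[of "{1..k}"] by (intro finite_measure_mono) auto
  ultimately show ?thesis using measure_nonneg[of M "A \<inter> B"] by simp
qed

end


context prob_space begin

lemma rep:
  fixes W :: "'a \<Rightarrow> real" and G :: "'a \<Rightarrow> real"
  assumes W: "W \<in> borel_measurable M" "finite (W ` space M)" and G: "integrable M G"
  shows "(\<integral>\<omega>. G \<omega> * h (W \<omega>) \<partial>M) =
    (\<Sum>w\<in>W ` space M. h w * (\<integral>\<omega>. G \<omega> * indicator {\<omega>\<in>space M. W \<omega> = w} \<omega> \<partial>M))"
proof -
  have meas: "{\<omega>\<in>space M. W \<omega> = w} \<in> sets M" for w using W(1) by measurable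
  have "(\<integral>\<omega>. G \<omega> * h (W \<omega>) \<partial>M) =
      (\<integral>\<omega>. (\<Sum>w\<in>W ` space M. h w * (G \<omega> * indicator {\<omega>\<in>space M. W \<omega> = w} \<omega>)) \<partial>M)"
  proof (rule Bochner_Integration.integral_cong)
    fix \<omega> assume o: "\<omega> \<in> space M"
    have "(\<Sum>w\<in>W ` space M. h w * (G \<omega> * indicator {\<omega>\<in>space M. W \<omega> = w} \<omega>))
       = (\<Sum>w\<in>W ` space M. if w = W \<omega> then h w * G \<omega> else 0)"
      using o by (intro sum.cong) (auto simp: indicator_def)
    also have "\<dots> = h (W \<omega>) * G \<omega>" using o W(2) by (simp add: sum.delta')
    finally show "G \<omega> * h (W \<omega>) = (\<Sum>w\<in>W ` space M. h w * (G \<omega> * indicator {\<omega>\<in>space M. W \<omega> = w} \<omega>))"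
      by simp
  qed simp
  also have "\<dots> = (\<Sum>w\<in>W ` space M. (\<integral>\<omega>. h w * (G \<omega> * indicator {\<omega>\<in>space M. W \<omega> = w} \<omega>) \<partial>M))"
    by (rule Bochner_Integration.integral_sum) (auto intro!: integrable_mult_right integrable_real_mult_indicator meas G)
  also have "\<dots> = (\<Sum>w\<in>W ` space M. h w * (\<integral>\<omega>. G \<omega> * indicator {\<omega>\<in>space M. W \<omega> = w} \<omega> \<partial>M))"
    by simp
  finally show ?thesis .
qed

lemma integral_ind_ind:
  assumes "A \<in> sets M" "B \<in> sets M"
  shows "(\<integral>\<omega>. indicator A \<omega> * indicator B \<omega> \<partial>M) = prob (A \<inter> B)"
proof -
  have "(\<integral>\<omega>. indicator A \<omega> * indicator B \<omega> \<partial>M) = (\<integral>\<omega>. indicator (A \<inter> B) \<omega> \<partial>M :: real)"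
    by (intro Bochner_Integration.integral_cong) (auto simp: indicator_def)
  also have "\<dots> = prob (A \<inter> B)" using assms by simp
  finally show ?thesis .
qed

lemma rep_ind:
  fixes W :: "'a \<Rightarrow> real"
  assumes W: "W \<in> borel_measurable M" "finite (W ` space M)" and A: "A \<in> sets M"
  shows "(\<integral>\<omega>. indicator A \<omega> * h (W \<omega>) \<partial>M) =
    (\<Sum>w\<in>W ` space M. h w * prob (A \<inter> {\<omega>\<in>space M. W \<omega> = w}))"
proof -
  have meas: "{\<omega>\<in>space M. W \<omega> = w} \<in> sets M" for w using W(1) by measurable
  have "integrable M (indicator A :: 'a \<Rightarrow> real)" using A by (intro integrable_real_indicator) (auto simp: less_top[symmetric])
  then show ?thesis
    using rep[OF W, of "indicator A" h] A
    by (simp add: integral_ind_ind meas)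
qed

lemma finite_range_integrable:
  fixes f :: "'a \<Rightarrow> real"
  assumes "f \<in> borel_measurable M" "finite (f ` space M)"
  shows "integrable M f"
proof -
  define B where "B = Max ((\<lambda>x. \<bar>x\<bar>) ` f ` space M)"
  have "\<forall>x\<in>space M. norm (f x) \<le> B"
    unfolding B_def using assms(2) by (auto intro!: Max_ge)
  then show ?thesis
    by (intro integrable_const_bound[where B=B]) (auto simp: assms)
qed

end

context mix begin

lemma sub_preimage:
  assumes "f \<in> borel_measurable (sub M X I)"
  shows "{\<omega>\<in>space M. f \<omega> \<in> S} \<in> gen_sigma M X I \<or> S \<notin> sets borel"
proof (cases "S \<in> sets borel")
  case True
  have "f -` S \<inter> space (sub M X I) \<in> sets (sub M X I)" using assms True by (intro measurable_sets)
  moreover have "f -` S \<inter> space (sub M X I) = {\<omega>\<in>space M. f \<omega> \<in> S}" by auto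
  ultimately show ?thesis by simp
qed simp

lemma sub_preimage_eq:
  assumes "f \<in> borel_measurable (sub M X I)"
  shows "{\<omega>\<in>space M. f \<omega> = (z::real)} \<in> gen_sigma M X I"
  using sub_preimage[OF assms, of "{z}"] by simp

lemma sub_preimage_in:
  assumes "f \<in> borel_measurable (sub M X I)" "finite S"
  shows "{\<omega>\<in>space M. f \<omega> \<in> (S::real set)} \<in> gen_sigma M X I"
  using sub_preimage[OF assms(1), of S] assms(2) by (simp add: finite_imp_closed borel_closed)

lemma claimC:
  assumes k: "k \<ge> 1" and A: "A \<in> gen_sigma M X {1..k}"
    and Z: "Z \<in> borel_measurable (sub M X {k+g..})" "finite (Z ` space M)"
    and bnd: "\<And>\<omega>. \<omega> \<in> space M \<Longrightarrow> lo \<le> Z \<omega> \<and> Z \<omega> \<le> hi"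
  shows "(\<integral>\<omega>. indicator A \<omega> * Z \<omega> \<partial>M) \<le> prob A * ((\<integral>\<omega>. Z \<omega> \<partial>M) + phi_mix M X g * (hi - lo))"
proof -
  let ?R = "Z ` space M"
  let ?\<phi> = "phi_mix M X g"
  define B where "B z = {\<omega>\<in>space M. Z \<omega> = z}" for z
  define d where "d z = prob (A \<inter> B z) - prob A * prob (B z)" for z
  have ZM: "Z \<in> borel_measurable M" using Z(1) k by (intro sub_M[of "{k+g..}"]) auto
  have AM: "A \<in> sets M" using A gen_sets[of "{1..k}"] by auto
  have e: "(\<integral>\<omega>. indicator C \<omega> * h (Z \<omega>) \<partial>M) = (\<Sum>z\<in>?R. h z * prob (C \<inter> B z))" if "C \<in> sets M" for C h
    unfolding B_def by (rule rep_ind[OF ZM Z(2) that])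
  have e1: "(\<integral>\<omega>. indicator A \<omega> * Z \<omega> \<partial>M) = (\<Sum>z\<in>?R. z * prob (A \<inter> B z))"
    using e[OF AM, of "\<lambda>z. z"] by simp
  have e2: "(\<integral>\<omega>. Z \<omega> \<partial>M) = (\<Sum>z\<in>?R. z * prob (B z))"
  proof -
    have "(\<integral>\<omega>. Z \<omega> \<partial>M) = (\<integral>\<omega>. indicator (space M) \<omega> * Z \<omega> \<partial>M)"
      by (rule Bochner_Integration.integral_cong) auto
    also have "\<dots> = (\<Sum>z\<in>?R. z * prob (space M \<inter> B z))" using e[of "space M" "\<lambda>z. z"] by simp
    also have "\<dots> = (\<Sum>z\<in>?R. z * prob (B z))" unfolding B_def by (simp add: Int_absorb1 Collect_restrict)
    finally show ?thesis .
  qed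
  have e3: "prob C = (\<Sum>z\<in>?R. prob (C \<inter> B z))" if "C \<in> sets M" for C
    using e[OF that, of "\<lambda>z. 1"] that by simp
  have sumd: "(\<Sum>z\<in>?R. d z) = 0"
    using e3[OF AM] e3[of "space M"] unfolding d_def
    by (simp add: sum_subtractf sum_distrib_left[symmetric] B_def Int_absorb1 Collect_restrict prob_space)
  define S where "S = {z\<in>?R. d z > 0}"
  define BS where "BS = {\<omega>\<in>space M. Z \<omega> \<in> S}"
  have finS: "finite S" unfolding S_def using Z(2) by auto
  have BSg: "BS \<in> gen_sigma M X {k+g..}" unfolding BS_def by (rule sub_preimage_in[OF Z(1) finS])
  have BSM: "BS \<in> sets M" using BSg gen_sets[of "{k+g..}"] k by auto
  have eS: "prob (C \<inter> BS) = (\<Sum>z\<in>?R. indicator S z * prob (C \<inter> B z))" if "C \<in> sets M" for C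
  proof -
    have "prob (C \<inter> BS) = (\<integral>\<omega>. indicator C \<omega> * indicator S (Z \<omega>) \<partial>M :: real)"
    proof -
      have "(\<integral>\<omega>. indicator C \<omega> * indicator S (Z \<omega>) \<partial>M) = (\<integral>\<omega>. indicator C \<omega> * indicator BS \<omega> \<partial>M :: real)"
        by (rule Bochner_Integration.integral_cong) (auto simp: BS_def indicator_def)
      then show ?thesis using integral_ind_ind[OF that BSM] by simp
    qed
    then show ?thesis using e[OF that, of "indicator S"] by simp
  qed
  have dS: "(\<Sum>z\<in>?R. indicator S z * d z) = prob (A \<inter> BS) - prob A * prob BS"
  proof -
    have "prob BS = prob (space M \<inter> BS)" using BSM by (simp add: Int_absorb1 sets.sets_into_space)
    also have "\<dots> = (\<Sum>z\<in>?R. indicator S z * prob (B z))"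
      using eS[of "space M"] unfolding B_def by (simp add: Int_absorb1 Collect_restrict)
    finally have pb: "prob BS = (\<Sum>z\<in>?R. indicator S z * prob (B z))" .
    show ?thesis unfolding d_def using eS[OF AM] pb
      by (simp add: algebra_simps sum_subtractf sum_distrib_left)
  qed
  have mixS: "prob (A \<inter> BS) - prob A * prob BS \<le> ?\<phi> * prob A"
    using mix_ineq[OF k A BSg] by linarith
  have "(\<integral>\<omega>. indicator A \<omega> * Z \<omega> \<partial>M) - prob A * (\<integral>\<omega>. Z \<omega> \<partial>M) = (\<Sum>z\<in>?R. z * d z)"
    unfolding e1 e2 d_def by (simp add: algebra_simps sum_subtractf sum_distrib_left)
  also have "\<dots> = (\<Sum>z\<in>?R. (z - lo) * d z)"
    using sumd by (simp add: algebra_simps sum_subtractf sum_distrib_left[symmetric])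
  also have "\<dots> \<le> (\<Sum>z\<in>?R. (hi - lo) * (indicator S z * d z))"
  proof (rule sum_mono)
    fix z assume z: "z \<in> ?R"
    then have "lo \<le> z" "z \<le> hi" using bnd by auto
    then show "(z - lo) * d z \<le> (hi - lo) * (indicator S z * d z)"
      using z by (cases "d z > 0") (auto simp: S_def indicator_def mult_right_mono mult_nonneg_nonpos)
  qed
  also have "\<dots> = (hi - lo) * (prob (A \<inter> BS) - prob A * prob BS)"
    by (simp add: sum_distrib_left[symmetric] dS)
  also have "\<dots> \<le> (hi - lo) * (?\<phi> * prob A)"
  proof -
    obtain \<omega> where "\<omega> \<in> space M" using not_empty by blast
    then have "lo \<le> hi" using bnd by force
    then show ?thesis using mixS by (intro mult_left_mono) auto
  qed
  finally show ?thesis by (simp add: algebra_simps)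
qed

end


context mix begin

lemma cov_ineq:
  fixes W Z :: "'a \<Rightarrow> real"
  assumes k: "k \<ge> 1" and W: "W \<in> borel_measurable (sub M X {1..k})" "finite (W ` space M)"
    "\<And>\<omega>. \<omega> \<in> space M \<Longrightarrow> 0 \<le> W \<omega>"
    and Z: "Z \<in> borel_measurable (sub M X {k+g..})" "finite (Z ` space M)"
    and bnd: "\<And>\<omega>. \<omega> \<in> space M \<Longrightarrow> lo \<le> Z \<omega> \<and> Z \<omega> \<le> hi"
  shows "(\<integral>\<omega>. W \<omega> * Z \<omega> \<partial>M) \<le> (\<integral>\<omega>. W \<omega> \<partial>M) * ((\<integral>\<omega>. Z \<omega> \<partial>M) + phi_mix M X g * (hi - lo))"
proof -
  let ?K = "(\<integral>\<omega>. Z \<omega> \<partial>M) + phi_mix M X g * (hi - lo)"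
  have WM: "W \<in> borel_measurable M" using W(1) by (intro sub_M[of "{1..k}"]) auto
  have ZM: "Z \<in> borel_measurable M" using Z(1) k by (intro sub_M[of "{k+g..}"]) auto
  have Zi: "integrable M Z" by (rule finite_range_integrable[OF ZM Z(2)])
  define A where "A w = {\<omega>\<in>space M. W \<omega> = w}" for w
  have Ag: "A w \<in> gen_sigma M X {1..k}" for w unfolding A_def by (rule sub_preimage_eq[OF W(1)])
  have AM: "A w \<in> sets M" for w using Ag[of w] gen_sets[of "{1..k}"] by auto
  have "(\<integral>\<omega>. W \<omega> * Z \<omega> \<partial>M) = (\<integral>\<omega>. Z \<omega> * W \<omega> \<partial>M)" by (simp add: mult.commute)
  also have "\<dots> = (\<Sum>w\<in>W ` space M. w * (\<integral>\<omega>. Z \<omega> * indicator (A w) \<omega> \<partial>M))"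
    unfolding A_def using rep[OF WM W(2) Zi, of "\<lambda>w. w"] by simp
  also have "\<dots> \<le> (\<Sum>w\<in>W ` space M. w * (prob (A w) * ?K))"
  proof (rule sum_mono)
    fix w assume w: "w \<in> W ` space M"
    have "(\<integral>\<omega>. Z \<omega> * indicator (A w) \<omega> \<partial>M) = (\<integral>\<omega>. indicator (A w) \<omega> * Z \<omega> \<partial>M)"
      by (simp add: mult.commute)
    also have "\<dots> \<le> prob (A w) * ?K" by (rule claimC[OF k Ag Z bnd])
    finally show "w * (\<integral>\<omega>. Z \<omega> * indicator (A w) \<omega> \<partial>M) \<le> w * (prob (A w) * ?K)"
      using w W(3) by (intro mult_left_mono) auto
  qed
  also have "\<dots> = (\<Sum>w\<in>W ` space M. w * prob (A w)) * ?K"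
    by (simp add: sum_distrib_right mult.assoc)
  also have "(\<Sum>w\<in>W ` space M. w * prob (A w)) = (\<integral>\<omega>. W \<omega> \<partial>M)"
  proof -
    have "(\<integral>\<omega>. 1 * W \<omega> \<partial>M) = (\<Sum>w\<in>W ` space M. w * (\<integral>\<omega>. 1 * indicator (A w) \<omega> \<partial>M))"
      unfolding A_def using rep[OF WM W(2), of "\<lambda>_. 1" "\<lambda>w. w"] by simp
    then show ?thesis using AM by simp
  qed
  finally show ?thesis .
qed

lemma finite_range_mult:
  fixes f g :: "'a \<Rightarrow> real"
  assumes "finite (f ` space M)" "finite (g ` space M)"
  shows "finite ((\<lambda>\<omega>. f \<omega> * g \<omega>) ` space M)"
proof -
  have "(\<lambda>\<omega>. f \<omega> * g \<omega>) ` space M \<subseteq> (\<lambda>(x, y). x * y) ` (f ` space M \<times> g ` space M)" by auto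
  moreover have "finite ((\<lambda>(x, y). x * y) ` (f ` space M \<times> g ` space M))" using assms by blast
  ultimately show ?thesis by (rule finite_subset)
qed

lemma finite_range_add:
  fixes f g :: "'a \<Rightarrow> real"
  assumes "finite (f ` space M)" "finite (g ` space M)"
  shows "finite ((\<lambda>\<omega>. f \<omega> + g \<omega>) ` space M)"
proof -
  have "(\<lambda>\<omega>. f \<omega> + g \<omega>) ` space M \<subseteq> (\<lambda>(x, y). x + y) ` (f ` space M \<times> g ` space M)" by auto
  moreover have "finite ((\<lambda>(x, y). x + y) ` (f ` space M \<times> g ` space M))" using assms by blast
  ultimately show ?thesis by (rule finite_subset)
qed

lemma finite_range_prod:
  fixes Z :: "nat \<Rightarrow> 'a \<Rightarrow> real"
  assumes "\<And>l. finite (Z l ` space M)"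
  shows "finite ((\<lambda>\<omega>. \<Prod>l<m. Z l \<omega>) ` space M)"
proof (induction m)
  case 0 then show ?case by (simp add: image_constant_conv)
next
  case (Suc m)
  show ?case using finite_range_mult[OF Suc assms[of m]] by simp
qed

lemma finite_range_sum:
  fixes Y :: "nat \<Rightarrow> 'a \<Rightarrow> real"
  assumes "\<And>i. i \<in> I \<Longrightarrow> finite (Y i ` space M)" "finite I"
  shows "finite ((\<lambda>\<omega>. \<Sum>i\<in>I. Y i \<omega>) ` space M)"
  using assms(2,1)
proof (induction I rule: finite_induct)
  case empty then show ?case by (simp add: image_constant_conv)
next
  case (insert i I)
  show ?case using finite_range_add[of "Y i" "\<lambda>\<omega>. \<Sum>i\<in>I. Y i \<omega>"] insert by simp
qed

lemma prod_bound:
  fixes Z :: "nat \<Rightarrow> 'a \<Rightarrow> real" and a b :: "nat \<Rightarrow> nat" and lo hi :: "nat \<Rightarrow> real"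
  assumes ab: "\<And>l. 1 \<le> a l" "\<And>l. a l \<le> b l" "\<And>l. b l + g \<le> a (Suc l)"
    and Zm: "\<And>l. Z l \<in> borel_measurable (sub M X {a l..b l})"
    and Zf: "\<And>l. finite (Z l ` space M)"
    and Zb: "\<And>l \<omega>. \<omega> \<in> space M \<Longrightarrow> lo l \<le> Z l \<omega> \<and> Z l \<omega> \<le> hi l"
    and lo: "\<And>l. 0 \<le> lo l"
  shows "(\<integral>\<omega>. (\<Prod>l<m. Z l \<omega>) \<partial>M) \<le> (\<Prod>l<m. (\<integral>\<omega>. Z l \<omega> \<partial>M) + phi_mix M X g * (hi l - lo l))"
proof (induction m)
  case 0 then show ?case by (simp add: prob_space)
next
  case (Suc m)
  obtain \<omega>0 where \<omega>0: "\<omega>0 \<in> space M" using not_empty by blast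
  have hilo: "lo l \<le> hi l" for l using Zb[OF \<omega>0, of l] by linarith
  have ZM: "Z l \<in> borel_measurable M" for l using Zm[of l] ab(1)[of l] by (intro sub_M[of "{a l..b l}"]) auto
  have EZ: "0 \<le> (\<integral>\<omega>. Z l \<omega> \<partial>M)" for l by (intro integral_nonneg_AE AE_I2) (meson order.trans lo Zb)
  have fac: "0 \<le> (\<integral>\<omega>. Z l \<omega> \<partial>M) + phi_mix M X g * (hi l - lo l)" for l
    using EZ[of l] hilo[of l] phi_mix_01(1)[of g] by simp
  show ?case
  proof (cases "m = 0")
    case True
    then show ?thesis using phi_mix_01(1)[of g] hilo[of 0] by simp
  next
    case False
    define k where "k = b (m - 1)"
    have k1: "k \<ge> 1" unfolding k_def using ab(1)[of "m-1"] ab(2)[of "m-1"] by linarith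
    have bmono: "b l \<le> b l'" if "l \<le> l'" for l l'
    proof -
      have s: "b l \<le> b (Suc l)" for l using ab(3)[of l] ab(2)[of "Suc l"] by linarith
      show ?thesis by (rule lift_Suc_mono_le[of b, OF s that])
    qed
    have Wm: "(\<lambda>\<omega>. \<Prod>l<m. Z l \<omega>) \<in> borel_measurable (sub M X {1..k})"
    proof (rule borel_measurable_prod)
      fix l assume "l \<in> {..<m}"
      then have "b l \<le> k" unfolding k_def using False by (intro bmono) auto
      then have "{a l..b l} \<subseteq> {1..k}" using ab(1)[of l] by auto
      then show "Z l \<in> borel_measurable (sub M X {1..k})" by (rule sub_mono[OF _ Zm])
    qed
    have Zmm: "Z m \<in> borel_measurable (sub M X {k+g..})"
    proof -
      have "a m \<ge> k + g" unfolding k_def using ab(3)[of "m-1"] False by (cases m) auto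
      then have "{a m..b m} \<subseteq> {k+g..}" by auto
      then show ?thesis by (rule sub_mono[OF _ Zm])
    qed
    have "(\<integral>\<omega>. (\<Prod>l<Suc m. Z l \<omega>) \<partial>M) = (\<integral>\<omega>. (\<Prod>l<m. Z l \<omega>) * Z m \<omega> \<partial>M)" by simp
    also have "\<dots> \<le> (\<integral>\<omega>. (\<Prod>l<m. Z l \<omega>) \<partial>M) * ((\<integral>\<omega>. Z m \<omega> \<partial>M) + phi_mix M X g * (hi m - lo m))"
      by (rule cov_ineq[OF k1 Wm finite_range_prod[OF Zf] _ Zmm Zf[of m] Zb])
         (auto intro!: prod_nonneg intro: order.trans[OF lo Zb[THEN conjunct1]])
    also have "\<dots> \<le> (\<Prod>l<m. (\<integral>\<omega>. Z l \<omega> \<partial>M) + phi_mix M X g * (hi l - lo l)) * ((\<integral>\<omega>. Z m \<omega> \<partial>M) + phi_mix M X g * (hi m - lo m))"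
      by (rule mult_right_mono[OF Suc.IH fac])
    finally show ?thesis by simp
  qed
qed

end


lemma exp_quad:
  fixes y :: real assumes "\<bar>y\<bar> \<le> 1" shows "exp y \<le> 1 + y + y\<^sup>2"
proof (cases "y \<ge> 0")
  case True then show ?thesis using assms exp_bound by auto
next
  case False
  define t where "t = - y"
  have t: "0 < t" "t \<le> 1" using False assms unfolding t_def by auto
  have e1: "1 + t + t\<^sup>2 / 2 \<le> exp t" using t by (intro exp_lower_Taylor_quadratic) auto
  have p: "0 < 1 - t + t\<^sup>2"
  proof -
    have "0 < t * t" using t by simp
    then show ?thesis using t unfolding power2_eq_square by linarith
  qed
  have "1 \<le> (1 + t + t\<^sup>2 / 2) * (1 - t + t\<^sup>2)"
  proof -
    have "(1 + t + t\<^sup>2 / 2) * (1 - t + t\<^sup>2) = 1 + t\<^sup>2 / 2 + t^3 / 2 + t^4 / 2"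
      by (simp add: field_simps power2_eq_square power3_eq_cube power4_eq_xxxx)
    then show ?thesis using t by simp
  qed
  also have "\<dots> \<le> exp t * (1 - t + t\<^sup>2)" using e1 p by (intro mult_right_mono) auto
  finally have "1 \<le> exp t * (1 - t + t\<^sup>2)" .
  then have "exp (-t) \<le> 1 - t + t\<^sup>2"
    by (simp add: exp_minus field_simps)
  then show ?thesis unfolding t_def by simp
qed

lemma exp_diff_le:
  fixes a :: real assumes "0 \<le> a" "a \<le> 1" shows "exp a - exp (-a) \<le> 6 * a"
proof -
  have "exp a - exp (-a) = exp a * (1 - exp (-2 * a))"
    by (simp add: algebra_simps exp_add[symmetric])
  also have "\<dots> \<le> 3 * (2 * a)"
  proof (rule mult_mono)
    show "exp a \<le> 3" using exp_le assms by (meson exp_le_cancel_iff order.trans)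
    show "1 - exp (-2 * a) \<le> 2 * a" using exp_ge_add_one_self[of "-2*a"] by simp
    show "0 \<le> 1 - exp (-2 * a)" using assms by simp
  qed simp
  finally show ?thesis by simp
qed

definition Yv :: "(nat \<Rightarrow> 'a \<Rightarrow> real) \<Rightarrow> real \<Rightarrow> real \<Rightarrow> real \<Rightarrow> nat \<Rightarrow> 'a \<Rightarrow> real" where
  "Yv X s x q i \<omega> = s * ((if X i \<omega> \<le> x then 1 else 0) - q)"

context mix begin

lemma Y_sub: "i \<in> I \<Longrightarrow> Yv X s x q i \<in> borel_measurable (sub M X I)"
proof -
  assume "i \<in> I"
  have [measurable]: "X i \<in> borel_measurable (sub M X I)" by (rule X_sub) fact
  show ?thesis unfolding Yv_def by measurable
qed

lemma Y_M: "i \<ge> 1 \<Longrightarrow> Yv X s x q i \<in> borel_measurable M"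
  using Y_sub[of i "{i}"] by (intro sub_M[of "{i}"]) auto

lemma Y_fin: "finite (Yv X s x q i ` space M)"
proof -
  have "Yv X s x q i ` space M \<subseteq> {s * (1 - q), s * (0 - q)}" by (auto simp: Yv_def)
  then show ?thesis by (rule finite_subset) simp
qed

lemma Y_abs:
  assumes "\<bar>s\<bar> = 1" "0 \<le> q" "q \<le> 1"
  shows "\<bar>Yv X s x q i \<omega>\<bar> \<le> 1"
  using assms by (auto simp: Yv_def abs_mult)

definition Ev where "Ev x i = {\<omega>\<in>space M. X i \<omega> \<le> x}"

lemma Ev_gen: "i \<in> I \<Longrightarrow> Ev x i \<in> gen_sigma M X I"
proof -
  assume "i \<in> I"
  have "X i \<in> borel_measurable (sub M X I)" by (rule X_sub) fact
  from sub_preimage[OF this, of "{..x}"] show ?thesis unfolding Ev_def by simp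
qed


lemma EvM: "i \<ge> 1 \<Longrightarrow> Ev x i \<in> sets M"
  using Ev_gen[of i "{i}" x] gen_sets[of "{i}"] by auto

lemma ind_int[simp]: "A \<in> sets M \<Longrightarrow> integrable M (indicator A :: 'a \<Rightarrow> real)"
  by (intro integrable_real_indicator) (auto simp: less_top[symmetric])

lemma int_lin:
  assumes "A \<in> sets M" "B \<in> sets M" "C \<in> sets M"
  shows "(\<integral>\<omega>. a * indicator A \<omega> + b * indicator B \<omega> + c * indicator C \<omega> + d \<partial>M) =
    a * prob A + b * prob B + c * prob C + (d::real)"
  using assms by (simp add: integral_add prob_space)

lemma finite_range_comp:
  fixes f :: "'a \<Rightarrow> real"
  assumes "finite (f ` space M)" shows "finite ((\<lambda>\<omega>. h (f \<omega>)) ` space M)"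
proof -
  have "(\<lambda>\<omega>. h (f \<omega>)) ` space M = h ` (f ` space M)" by auto
  then show ?thesis using assms by simp
qed

lemma Y_ind: "\<omega> \<in> space M \<Longrightarrow> Yv X s x q i \<omega> = s * (indicator (Ev x i) \<omega> - q)"
  by (simp add: Yv_def Ev_def indicator_def)

lemma EY0:
  assumes "i \<ge> 1" "prob (Ev x i) = q"
  shows "(\<integral>\<omega>. Yv X s x q i \<omega> \<partial>M) = 0"
proof -
  have "(\<integral>\<omega>. Yv X s x q i \<omega> \<partial>M) = (\<integral>\<omega>. s * indicator (Ev x i) \<omega> + 0 * indicator (Ev x i) \<omega> + 0 * indicator (Ev x i) \<omega> + (- s * q) \<partial>M)"
    by (rule Bochner_Integration.integral_cong) (auto simp: Y_ind algebra_simps)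
  also have "\<dots> = s * prob (Ev x i) - s * q"
    using EvM[OF assms(1), of x] by (subst int_lin) auto
  finally show ?thesis using assms by simp
qed

lemma EYY:
  assumes "i \<ge> 1" "j \<ge> 1" "\<bar>s\<bar> = 1" "prob (Ev x i) = q" "prob (Ev x j) = q"
  shows "(\<integral>\<omega>. Yv X s x q i \<omega> * Yv X s x q j \<omega> \<partial>M) = prob (Ev x i \<inter> Ev x j) - q\<^sup>2"
proof -
  have ss: "s * s = 1" using assms(3) by (metis abs_mult_self_eq mult_1)
  have Ei: "Ev x i \<in> sets M" and Ej: "Ev x j \<in> sets M" using EvM assms by auto
  have "(\<integral>\<omega>. Yv X s x q i \<omega> * Yv X s x q j \<omega> \<partial>M) =
     (\<integral>\<omega>. 1 * indicator (Ev x i \<inter> Ev x j) \<omega> + (- q) * indicator (Ev x i) \<omega> + (- q) * indicator (Ev x j) \<omega> + q\<^sup>2 \<partial>M)"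
  proof (rule Bochner_Integration.integral_cong)
    fix \<omega> assume "\<omega> \<in> space M"
    then have "Yv X s x q i \<omega> * Yv X s x q j \<omega> = (s * s) * ((indicator (Ev x i) \<omega> - q) * (indicator (Ev x j) \<omega> - q))"
      by (simp add: Y_ind algebra_simps)
    also have "\<dots> = indicator (Ev x i \<inter> Ev x j) \<omega> - q * indicator (Ev x i) \<omega> - q * indicator (Ev x j) \<omega> + q\<^sup>2"
      unfolding ss by (simp add: indicator_def power2_eq_square algebra_simps)
    finally show "Yv X s x q i \<omega> * Yv X s x q j \<omega> = 1 * indicator (Ev x i \<inter> Ev x j) \<omega> + (- q) * indicator (Ev x i) \<omega> + (- q) * indicator (Ev x j) \<omega> + q\<^sup>2" by simp
  qed simp
  also have "\<dots> = prob (Ev x i \<inter> Ev x j) - q * prob (Ev x i) - q * prob (Ev x j) + q\<^sup>2"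
    using Ei Ej by (subst int_lin) auto
  finally show ?thesis using assms by (simp add: power2_eq_square)
qed

lemma cov_bound:
  assumes "1 \<le> i" "i < j" "\<bar>s\<bar> = 1" "prob (Ev x i) = q" "prob (Ev x j) = q"
  shows "\<bar>(\<integral>\<omega>. Yv X s x q i \<omega> * Yv X s x q j \<omega> \<partial>M)\<bar> \<le> phi_mix M X (j - i)"
proof -
  have A: "Ev x i \<in> gen_sigma M X {1..i}" using assms by (intro Ev_gen) auto
  have B: "Ev x j \<in> gen_sigma M X {i + (j - i)..}" using assms by (intro Ev_gen) auto
  have "\<bar>prob (Ev x i \<inter> Ev x j) - prob (Ev x i) * prob (Ev x j)\<bar> \<le> phi_mix M X (j - i) * prob (Ev x i)"
    by (rule mix_ineq[OF assms(1) A B])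
  also have "\<dots> \<le> phi_mix M X (j - i)"
    using phi_mix_01[of "j - i"] by (intro mult_left_le) auto
  finally show ?thesis using EYY[of i j s x q] assms by (simp add: power2_eq_square)
qed

lemma var_bound:
  assumes "1 \<le> i" "\<bar>s\<bar> = 1" "prob (Ev x i) = q"
  shows "(\<integral>\<omega>. Yv X s x q i \<omega> * Yv X s x q i \<omega> \<partial>M) \<le> 1/4"
proof -
  have "(\<integral>\<omega>. Yv X s x q i \<omega> * Yv X s x q i \<omega> \<partial>M) = q - q\<^sup>2"
    using EYY[of i i s x q] assms by simp
  also have "\<dots> \<le> 1/4"
  proof -
    have "0 \<le> (q - 1/2)\<^sup>2" by simp
    then show ?thesis by (simp add: power2_eq_square algebra_simps)
  qed
  finally show ?thesis .
qed

end


definition PhiS :: "'a measure \<Rightarrow> (nat \<Rightarrow> 'a \<Rightarrow> real) \<Rightarrow> real" where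
  "PhiS M X = (\<Sum>n. sqrt (phi_mix M X (Suc n)))"

context mix begin

lemma phi_le_sqrt: "phi_mix M X d \<le> sqrt (phi_mix M X d)"
proof -
  have "phi_mix M X d * phi_mix M X d \<le> 1 * phi_mix M X d"
    using phi_mix_01[of d] by (intro mult_right_mono) auto
  then show ?thesis by (intro real_le_rsqrt) (simp add: power2_eq_square)
qed

lemma sum_phi_gen:
  assumes sm: "summable (\<lambda>n. sqrt (phi_mix M X (Suc n)))" and J: "finite J"
    and h: "inj_on h J" and hh: "\<And>j. j \<in> J \<Longrightarrow> d j = Suc (h j)"
  shows "(\<Sum>j\<in>J. phi_mix M X (d j)) \<le> PhiS M X"
proof -
  have "(\<Sum>j\<in>J. phi_mix M X (d j)) \<le> (\<Sum>j\<in>J. sqrt (phi_mix M X (Suc (h j))))"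
    using hh by (intro sum_mono) (simp add: phi_le_sqrt)
  also have "\<dots> = (\<Sum>k\<in>h ` J. sqrt (phi_mix M X (Suc k)))"
    using sum.reindex[OF h, of "\<lambda>k. sqrt (phi_mix M X (Suc k))"] by simp
  also have "\<dots> \<le> PhiS M X"
    unfolding PhiS_def using J phi_mix_01 by (intro sum_le_suminf[OF sm]) auto
  finally show ?thesis .
qed

lemma sum_phi_right:
  assumes sm: "summable (\<lambda>n. sqrt (phi_mix M X (Suc n)))" and J: "finite J"
  shows "(\<Sum>j\<in>{j\<in>J. i < j}. phi_mix M X (j - i)) \<le> PhiS M X"
  by (rule sum_phi_gen[OF sm, of _ "\<lambda>j. j - i - 1"]) (use J in \<open>auto simp: inj_on_def\<close>)

lemma sum_phi_left:
  assumes sm: "summable (\<lambda>n. sqrt (phi_mix M X (Suc n)))" and J: "finite J"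
  shows "(\<Sum>j\<in>{j\<in>J. j < i}. phi_mix M X (i - j)) \<le> PhiS M X"
  by (rule sum_phi_gen[OF sm, of _ "\<lambda>j. i - j - 1"]) (use J in \<open>auto simp: inj_on_def\<close>)

lemma YY_int: "i \<ge> 1 \<Longrightarrow> j \<ge> 1 \<Longrightarrow> integrable M (\<lambda>\<omega>. Yv X s x q i \<omega> * Yv X s x q j \<omega>)"
  by (intro finite_range_integrable finite_range_mult Y_fin borel_measurable_times Y_M)

lemma EU2:
  assumes I: "finite I" "I \<subseteq> {1..}" and s: "\<bar>s\<bar> = 1"
    and hq: "\<And>i. i \<ge> 1 \<Longrightarrow> prob (Ev x i) = q"
    and sm: "summable (\<lambda>n. sqrt (phi_mix M X (Suc n)))"
  shows "(\<integral>\<omega>. (\<Sum>i\<in>I. Yv X s x q i \<omega>)\<^sup>2 \<partial>M) \<le> card I * (1/4 + 2 * PhiS M X)"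
proof -
  let ?Y = "Yv X s x q"
  let ?\<phi> = "phi_mix M X"
  define c where "c i j = (if j = i then 1/4 else 0) + (if i < j then ?\<phi> (j - i) else 0)
      + (if j < i then ?\<phi> (i - j) else 0)" for i j
  have "(\<integral>\<omega>. (\<Sum>i\<in>I. ?Y i \<omega>)\<^sup>2 \<partial>M) = (\<integral>\<omega>. (\<Sum>i\<in>I. \<Sum>j\<in>I. ?Y i \<omega> * ?Y j \<omega>) \<partial>M)"
    by (simp add: power2_eq_square sum_product)
  also have "\<dots> = (\<Sum>i\<in>I. \<Sum>j\<in>I. (\<integral>\<omega>. ?Y i \<omega> * ?Y j \<omega> \<partial>M))"
    using I by (simp add: Bochner_Integration.integral_sum integrable_sum YY_int subset_iff)
  also have "\<dots> \<le> (\<Sum>i\<in>I. \<Sum>j\<in>I. c i j)"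
  proof (intro sum_mono)
    fix i j assume ij: "i \<in> I" "j \<in> I"
    then have i1: "i \<ge> 1" and j1: "j \<ge> 1" using I by auto
    consider "i = j" | "i < j" | "j < i" by linarith
    then show "(\<integral>\<omega>. ?Y i \<omega> * ?Y j \<omega> \<partial>M) \<le> c i j"
    proof cases
      case 1 then show ?thesis using var_bound[OF i1 s hq[OF i1]] by (simp add: c_def)
    next
      case 2 then show ?thesis using cov_bound[OF i1 2 s hq[OF i1] hq[OF j1]] by (simp add: c_def)
    next
      case 3
      have "(\<integral>\<omega>. ?Y i \<omega> * ?Y j \<omega> \<partial>M) = (\<integral>\<omega>. ?Y j \<omega> * ?Y i \<omega> \<partial>M)" by (simp add: mult.commute)
      then show ?thesis using 3 cov_bound[OF j1 3 s hq[OF j1] hq[OF i1]] by (simp add: c_def)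
    qed
  qed
  also have "\<dots> \<le> card I * (1/4 + 2 * PhiS M X)"
  proof (rule sum_bounded_above)
    fix i assume "i \<in> I"
    have "(\<Sum>j\<in>I. c i j) = (\<Sum>j\<in>I. if j = i then 1/4 else 0) + (\<Sum>j\<in>I. if i < j then ?\<phi> (j - i) else 0)
       + (\<Sum>j\<in>I. if j < i then ?\<phi> (i - j) else 0)"
      unfolding c_def by (simp add: sum.distrib)
    also have "\<dots> = (if i \<in> I then 1/4 else 0) + (\<Sum>j\<in>{j\<in>I. i < j}. ?\<phi> (j - i)) + (\<Sum>j\<in>{j\<in>I. j < i}. ?\<phi> (i - j))"
      using I by (simp add: sum.delta sum.inter_filter)
    also have "\<dots> \<le> 1/4 + PhiS M X + PhiS M X"
      using sum_phi_right[OF sm I(1), of i] sum_phi_left[OF sm I(1), of i] by auto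
    finally show "(\<Sum>j\<in>I. c i j) \<le> 1/4 + 2 * PhiS M X" by simp
  qed
  finally show ?thesis .
qed

lemma U_M: "I \<subseteq> {1..} \<Longrightarrow> (\<lambda>\<omega>. \<Sum>i\<in>I. Yv X s x q i \<omega>) \<in> borel_measurable M"
  by (intro borel_measurable_sum Y_M) auto

lemma U_fin: "finite I \<Longrightarrow> finite ((\<lambda>\<omega>. \<Sum>i\<in>I. Yv X s x q i \<omega>) ` space M)"
  by (intro finite_range_sum Y_fin)

lemma q01:
  assumes "\<And>i. i \<ge> 1 \<Longrightarrow> prob (Ev x i) = q" shows "0 \<le> q" "q \<le> 1"
  using assms[of 1] by auto

lemma U_abs:
  assumes s: "\<bar>s\<bar> = 1" and hq: "\<And>i. i \<ge> 1 \<Longrightarrow> prob (Ev x i) = q" and I: "finite I"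
  shows "\<bar>\<Sum>i\<in>I. Yv X s x q i \<omega>\<bar> \<le> card I"
proof -
  have "\<bar>\<Sum>i\<in>I. Yv X s x q i \<omega>\<bar> \<le> (\<Sum>i\<in>I. \<bar>Yv X s x q i \<omega>\<bar>)" by (rule sum_abs)
  also have "\<dots> \<le> real (card I) * 1" by (rule sum_bounded_above) (use Y_abs[OF s q01[OF hq]] in auto)
  finally show ?thesis by simp
qed

lemma mgf:
  fixes lam :: real
  assumes I: "finite I" "I \<subseteq> {1..}" and s: "\<bar>s\<bar> = 1"
    and hq: "\<And>i. i \<ge> 1 \<Longrightarrow> prob (Ev x i) = q"
    and sm: "summable (\<lambda>n. sqrt (phi_mix M X (Suc n)))"
    and lam: "0 \<le> lam" "lam * card I \<le> 1"
  shows "(\<integral>\<omega>. exp (lam * (\<Sum>i\<in>I. Yv X s x q i \<omega>)) \<partial>M) \<le> 1 + lam\<^sup>2 * (card I * (1/4 + 2 * PhiS M X))"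
proof -
  define U where "U \<omega> = (\<Sum>i\<in>I. Yv X s x q i \<omega>)" for \<omega>
  have UM: "U \<in> borel_measurable M" unfolding U_def using I by (intro U_M)
  have Uf: "finite (U ` space M)" unfolding U_def using I by (intro U_fin)
  have intf: "integrable M (\<lambda>\<omega>. h (U \<omega>))" if "h \<in> borel_measurable borel" for h :: "real \<Rightarrow> real"
    by (rule finite_range_integrable[OF measurable_compose[OF UM that] finite_range_comp[OF Uf]])
  have EU: "(\<integral>\<omega>. U \<omega> \<partial>M) = 0"
  proof -
    have "(\<integral>\<omega>. U \<omega> \<partial>M) = (\<Sum>i\<in>I. (\<integral>\<omega>. Yv X s x q i \<omega> \<partial>M))"
      unfolding U_def
    proof (rule Bochner_Integration.integral_sum)
      fix i assume "i \<in> I" then have "i \<ge> 1" using I by auto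
      then show "integrable M (Yv X s x q i)" by (rule finite_range_integrable[OF Y_M Y_fin])
    qed
    also have "\<dots> = 0" using I by (intro sum.neutral) (auto intro!: EY0 hq)
    finally show ?thesis .
  qed
  have "(\<integral>\<omega>. exp (lam * U \<omega>) \<partial>M) \<le> (\<integral>\<omega>. 1 + lam * U \<omega> + lam\<^sup>2 * (U \<omega>)\<^sup>2 \<partial>M)"
  proof (rule integral_mono)
    have "(\<lambda>u. exp (lam * u)) \<in> borel_measurable borel" by (intro borel_measurable_continuous_onI continuous_intros)
    then show "integrable M (\<lambda>\<omega>. exp (lam * U \<omega>))" using intf[of "\<lambda>u. exp (lam * u)"] by simp
    have "(\<lambda>u. 1 + lam * u + lam\<^sup>2 * u\<^sup>2) \<in> borel_measurable borel" by (intro borel_measurable_continuous_onI continuous_intros)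
    then show "integrable M (\<lambda>\<omega>. 1 + lam * U \<omega> + lam\<^sup>2 * (U \<omega>)\<^sup>2)"
      using intf[of "\<lambda>u. 1 + lam * u + lam\<^sup>2 * u\<^sup>2"] by simp
    fix \<omega> assume "\<omega> \<in> space M"
    have Ua: "\<bar>U \<omega>\<bar> \<le> card I" unfolding U_def by (rule U_abs) (use s hq I in auto)
    have "\<bar>lam * U \<omega>\<bar> \<le> lam * card I"
      unfolding abs_mult using lam Ua by (simp add: mult_left_mono)
    then have "exp (lam * U \<omega>) \<le> 1 + lam * U \<omega> + (lam * U \<omega>)\<^sup>2" using lam by (intro exp_quad) auto
    then show "exp (lam * U \<omega>) \<le> 1 + lam * U \<omega> + lam\<^sup>2 * (U \<omega>)\<^sup>2" by (simp add: power_mult_distrib)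
  qed
  also have "\<dots> = 1 + lam * (\<integral>\<omega>. U \<omega> \<partial>M) + lam\<^sup>2 * (\<integral>\<omega>. (U \<omega>)\<^sup>2 \<partial>M)"
  proof -
    have i1: "integrable M U" using intf[of "\<lambda>u. u"] by simp
    have "(\<lambda>u::real. u\<^sup>2) \<in> borel_measurable borel" by simp
    then have i2: "integrable M (\<lambda>\<omega>. (U \<omega>)\<^sup>2)" using intf[of "\<lambda>u. u\<^sup>2"] by simp
    show ?thesis using i1 i2 by (simp add: prob_space)
  qed
  also have "\<dots> \<le> 1 + lam\<^sup>2 * (card I * (1/4 + 2 * PhiS M X))"
  proof -
    have E2: "(\<integral>\<omega>. (U \<omega>)\<^sup>2 \<partial>M) \<le> card I * (1/4 + 2 * PhiS M X)"
      unfolding U_def by (rule EU2) (use I s hq sm in auto)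
    show ?thesis unfolding EU using E2 by (simp add: mult_left_mono)
  qed
  finally show ?thesis unfolding U_def .
qed

end


definition blk :: "nat \<Rightarrow> nat \<Rightarrow> nat \<Rightarrow> nat \<Rightarrow> nat set" where
  "blk n g r l = {i\<in>{1..n}. (i - 1) div g = 2*l + r}"

lemma blk_sub: "g \<ge> 1 \<Longrightarrow> blk n g r l \<subseteq> {(2*l+r)*g+1 .. (2*l+r+1)*g}"
proof
  fix i assume g: "g \<ge> 1" and i: "i \<in> blk n g r l"
  define j where "j = 2*l+r"
  have i1: "i \<ge> 1" and d: "(i - 1) div g = j" using i unfolding blk_def j_def by auto
  have e: "i - 1 = j * g + (i - 1) mod g" by (metis d div_mult_mod_eq)
  have m: "(i - 1) mod g < g" using g by simp
  have "j * g + 1 \<le> i" using e i1 by linarith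
  moreover have "i \<le> (j + 1) * g" using e m i1 by (simp add: algebra_simps)
  ultimately show "i \<in> {(2*l+r)*g+1 .. (2*l+r+1)*g}" unfolding j_def by simp
qed

lemma blk_fin[simp]: "finite (blk n g r l)" unfolding blk_def by simp

lemma blk_pos: "blk n g r l \<subseteq> {1..}" unfolding blk_def by auto

lemma card_blk: "g \<ge> 1 \<Longrightarrow> card (blk n g r l) \<le> g"
proof -
  assume g: "g \<ge> 1"
  have "card (blk n g r l) \<le> card {(2*l+r)*g+1 .. (2*l+r+1)*g}"
    by (rule card_mono[OF _ blk_sub[OF g]]) simp
  also have "\<dots> = g" by (simp add: algebra_simps)
  finally show ?thesis .
qed

lemma sum_card_blk: "(\<Sum>l<n. card (blk n g r l)) \<le> n"
proof -
  have "(\<Sum>l<n. card (blk n g r l)) = card (\<Union>l\<in>{..<n}. blk n g r l)"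
    by (rule card_UN_disjoint[symmetric]) (auto simp: blk_def)
  also have "\<dots> \<le> card {1..n}" by (rule card_mono) (auto simp: blk_def)
  finally show ?thesis by simp
qed

lemma sum_even_odd: "(\<Sum>j<2*n. h j) = (\<Sum>l<n. h (2*l)) + (\<Sum>l<n. h (2*l+1::nat))"
  by (induction n) (auto simp: algebra_simps)

lemma split_sum:
  fixes f :: "nat \<Rightarrow> real"
  assumes g: "g \<ge> 1"
  shows "(\<Sum>i\<in>{1..n}. f i) = (\<Sum>l<n. \<Sum>i\<in>blk n g 0 l. f i) + (\<Sum>l<n. \<Sum>i\<in>blk n g 1 l. f i)"
proof -
  have sub: "(\<lambda>i. (i - 1) div g) ` {1..n} \<subseteq> {..<2*n}"
  proof
    fix j assume "j \<in> (\<lambda>i. (i - 1) div g) ` {1..n}"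
    then obtain i where i: "i \<in> {1..n}" "j = (i - 1) div g" by auto
    have "j \<le> i - 1" unfolding i(2) by (rule div_le_dividend)
    then show "j \<in> {..<2*n}" using i(1) by auto
  qed
  have "(\<Sum>i\<in>{1..n}. f i) = (\<Sum>j<2*n. \<Sum>i\<in>{x. x \<in> {1..n} \<and> (x - 1) div g = j}. f i)"
    by (rule sum.group[symmetric, OF _ _ sub]) auto
  also have "\<dots> = (\<Sum>l<n. \<Sum>i\<in>blk n g 0 l. f i) + (\<Sum>l<n. \<Sum>i\<in>blk n g 1 l. f i)"
    unfolding sum_even_odd blk_def by simp
  finally show ?thesis .
qed

context mix begin

lemma fam:
  fixes lam :: real
  assumes g: "g \<ge> 1" and lam: "0 < lam" "lam * g \<le> 1" and s: "\<bar>s\<bar> = 1"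
    and hq: "\<And>i. i \<ge> 1 \<Longrightarrow> prob (Ev x i) = q"
    and sm: "summable (\<lambda>n. sqrt (phi_mix M X (Suc n)))"
  shows "(\<integral>\<omega>. exp (lam * (\<Sum>l<n. \<Sum>i\<in>blk n g r l. Yv X s x q i \<omega>)) \<partial>M)
     \<le> exp (n * (lam\<^sup>2 * (1/4 + 2 * PhiS M X) + 6 * lam * phi_mix M X g))"
proof -
  let ?\<phi> = "phi_mix M X g"
  define K where "K = lam\<^sup>2 * (1/4 + 2 * PhiS M X) + 6 * lam * ?\<phi>"
  define c where "c l = card (blk n g r l)" for l
  define U where "U l \<omega> = (\<Sum>i\<in>blk n g r l. Yv X s x q i \<omega>)" for l \<omega>
  define Z where "Z l \<omega> = exp (lam * U l \<omega>)" for l \<omega>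
  define a where "a l = (2*l+r)*g+1" for l
  define b where "b l = (2*l+r+1)*g" for l
  define lo where "lo l = exp (- lam * c l)" for l
  define hi where "hi l = exp (lam * c l)" for l
  have PhiS0: "0 \<le> PhiS M X" unfolding PhiS_def using sm phi_mix_01 by (intro suminf_nonneg) auto
  have K0: "0 \<le> K" unfolding K_def using lam PhiS0 phi_mix_01[of g] by auto
  have cg: "c l \<le> g" for l unfolding c_def by (rule card_blk[OF g])
  have lc: "lam * c l \<le> 1" for l
  proof -
    have "lam * c l \<le> lam * g" using cg[of l] lam by (intro mult_left_mono) auto
    then show ?thesis using lam by linarith
  qed
  have Ua: "\<bar>U l \<omega>\<bar> \<le> c l" for l \<omega> unfolding U_def c_def by (rule U_abs) (use s hq in auto)
  have prodb: "(\<integral>\<omega>. (\<Prod>l<n. Z l \<omega>) \<partial>M) \<le> (\<Prod>l<n. (\<integral>\<omega>. Z l \<omega> \<partial>M) + ?\<phi> * (hi l - lo l))"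
  proof (rule prod_bound[of a b g Z lo hi])
    show "1 \<le> a l" for l unfolding a_def by simp
    show "a l \<le> b l" for l unfolding a_def b_def using g by (simp add: algebra_simps)
    show "b l + g \<le> a (Suc l)" for l unfolding a_def b_def by (simp add: algebra_simps)
    show "Z l \<in> borel_measurable (sub M X {a l..b l})" for l
    proof -
      have [measurable]: "U l \<in> borel_measurable (sub M X {a l..b l})"
        unfolding U_def using blk_sub[OF g, of n r l] unfolding a_def b_def
        by (intro borel_measurable_sum Y_sub) auto
      show ?thesis unfolding Z_def by measurable
    qed
    show "finite (Z l ` space M)" for l unfolding Z_def U_def by (rule finite_range_comp[OF U_fin[OF blk_fin]])
    show "lo l \<le> Z l \<omega> \<and> Z l \<omega> \<le> hi l" for l \<omega>
    proof -
      have u1: "U l \<omega> \<le> c l" "- U l \<omega> \<le> c l" using Ua[of l \<omega>] by (auto simp: abs_le_iff)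
      have "lam * (- U l \<omega>) \<le> lam * c l" using u1(2) lam by (intro mult_left_mono) auto
      moreover have "lam * U l \<omega> \<le> lam * c l" using u1(1) lam by (intro mult_left_mono) auto
      ultimately have "- lam * c l \<le> lam * U l \<omega>" "lam * U l \<omega> \<le> lam * c l" by auto
      then show ?thesis unfolding lo_def hi_def Z_def by simp
    qed
    show "0 \<le> lo l" for l unfolding lo_def by simp
  qed
  also have "\<dots> \<le> (\<Prod>l<n. exp (c l * K))"
  proof (rule prod_mono)
    fix l assume "l \<in> {..<n}"
    have EZ: "(\<integral>\<omega>. Z l \<omega> \<partial>M) \<le> 1 + lam\<^sup>2 * (c l * (1/4 + 2 * PhiS M X))"
      unfolding Z_def U_def c_def
      by (rule mgf) (use blk_pos s hq sm lam lc[of l] in \<open>auto simp: c_def\<close>)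
    have EZ0: "0 \<le> (\<integral>\<omega>. Z l \<omega> \<partial>M)" unfolding Z_def by simp
    have hl: "hi l - lo l \<le> 6 * (lam * c l)"
      unfolding hi_def lo_def using exp_diff_le[of "lam * c l"] lc[of l] lam by simp
    have hl0: "0 \<le> hi l - lo l" unfolding hi_def lo_def using lam by simp
    have "?\<phi> * (hi l - lo l) \<le> ?\<phi> * (6 * (lam * c l))"
      using hl phi_mix_01[of g] by (intro mult_left_mono) auto
    then have "(\<integral>\<omega>. Z l \<omega> \<partial>M) + ?\<phi> * (hi l - lo l) \<le> 1 + c l * K"
      using EZ unfolding K_def by (simp add: algebra_simps)
    also have "\<dots> \<le> exp (c l * K)" by (rule exp_ge_add_one_self)
    finally show "0 \<le> (\<integral>\<omega>. Z l \<omega> \<partial>M) + ?\<phi> * (hi l - lo l) \<and>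
        (\<integral>\<omega>. Z l \<omega> \<partial>M) + ?\<phi> * (hi l - lo l) \<le> exp (c l * K)"
      using EZ0 hl0 phi_mix_01[of g] by auto
  qed
  also have "\<dots> = exp ((\<Sum>l<n. c l) * K)" by (simp add: exp_sum sum_distrib_right)
  also have "\<dots> \<le> exp (n * K)"
  proof -
    have "real (\<Sum>l<n. c l) \<le> real n" unfolding c_def using sum_card_blk[of n g r] by linarith
    then show ?thesis using K0 by (simp add: mult_right_mono)
  qed
  finally have main: "(\<integral>\<omega>. (\<Prod>l<n. Z l \<omega>) \<partial>M) \<le> exp (n * K)" .
  have "(\<integral>\<omega>. exp (lam * (\<Sum>l<n. \<Sum>i\<in>blk n g r l. Yv X s x q i \<omega>)) \<partial>M) = (\<integral>\<omega>. (\<Prod>l<n. Z l \<omega>) \<partial>M)"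
    by (rule Bochner_Integration.integral_cong) (simp_all add: Z_def U_def sum_distrib_left exp_sum)
  then show ?thesis using main unfolding K_def by simp
qed

end


context mix begin

lemma S_M: "(\<lambda>\<omega>. \<Sum>l<n. \<Sum>i\<in>blk n g r l. Yv X s x q i \<omega>) \<in> borel_measurable M"
  by (intro borel_measurable_sum Y_M) (auto simp: blk_def)

lemma S_fin: "finite ((\<lambda>\<omega>. \<Sum>l<n. \<Sum>i\<in>blk n g r l. Yv X s x q i \<omega>) ` space M)"
  by (intro finite_range_sum U_fin) auto

lemma tail:
  fixes lam t :: real
  assumes g: "g \<ge> 1" and lam: "0 < lam" "lam * g \<le> 1" and s: "\<bar>s\<bar> = 1"
    and hq: "\<And>i. i \<ge> 1 \<Longrightarrow> prob (Ev x i) = q"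
    and sm: "summable (\<lambda>n. sqrt (phi_mix M X (Suc n)))"
  shows "prob {\<omega>\<in>space M. t \<le> (\<Sum>i\<in>{1..n}. Yv X s x q i \<omega>)}
     \<le> 2 * exp (n * (lam\<^sup>2 * (1/4 + 2 * PhiS M X) + 6 * lam * phi_mix M X g) - lam * t / 2)"
proof -
  define K where "K = n * (lam\<^sup>2 * (1/4 + 2 * PhiS M X) + 6 * lam * phi_mix M X g)"
  define S where "S r \<omega> = (\<Sum>l<n. \<Sum>i\<in>blk n g r l. Yv X s x q i \<omega>)" for r \<omega>
  define A where "A r = {\<omega>\<in>space M. t / 2 \<le> S r \<omega>}" for r
  have SM: "S r \<in> borel_measurable M" for r unfolding S_def by (rule S_M)
  have AM: "A r \<in> sets M" for r unfolding A_def using SM[of r] by measurable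
  have pA: "prob (A r) \<le> exp (K - lam * t / 2)" for r
  proof -
    have "A r = {\<omega>\<in>space M. exp (lam * t / 2) \<le> exp (lam * S r \<omega>)}"
      unfolding A_def using lam by (auto simp: field_simps)
    also have "prob \<dots> \<le> (\<integral>\<omega>. exp (lam * S r \<omega>) \<partial>M) / exp (lam * t / 2)"
    proof (rule integral_Markov_inequality_measure[where A="space M"])
      have "(\<lambda>\<omega>. exp (lam * S r \<omega>)) \<in> borel_measurable M" using SM[of r] by measurable
      moreover have "finite ((\<lambda>\<omega>. exp (lam * S r \<omega>)) ` space M)"
        unfolding S_def by (rule finite_range_comp[OF S_fin])
      ultimately show "integrable M (\<lambda>\<omega>. exp (lam * S r \<omega>))" by (rule finite_range_integrable)
    qed auto
    also have "\<dots> \<le> exp K / exp (lam * t / 2)"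
      unfolding S_def K_def by (intro divide_right_mono fam) (use assms in auto)
    also have "\<dots> = exp (K - lam * t / 2)" by (simp add: exp_diff)
    finally show ?thesis .
  qed
  have "{\<omega>\<in>space M. t \<le> (\<Sum>i\<in>{1..n}. Yv X s x q i \<omega>)} \<subseteq> A 0 \<union> A 1"
  proof
    fix \<omega> assume "\<omega> \<in> {\<omega>\<in>space M. t \<le> (\<Sum>i\<in>{1..n}. Yv X s x q i \<omega>)}"
    then have "\<omega> \<in> space M" "t \<le> S 0 \<omega> + S 1 \<omega>"
      using split_sum[OF g, of "\<lambda>i. Yv X s x q i \<omega>" n] unfolding S_def by auto
    then show "\<omega> \<in> A 0 \<union> A 1" unfolding A_def by auto
  qed
  then have "prob {\<omega>\<in>space M. t \<le> (\<Sum>i\<in>{1..n}. Yv X s x q i \<omega>)} \<le> prob (A 0 \<union> A 1)"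
    using AM by (intro finite_measure_mono) auto
  also have "\<dots> \<le> prob (A 0) + prob (A 1)" using AM by (intro measure_subadditive) (auto simp: emeasure_eq_measure)
  also have "\<dots> \<le> 2 * exp (K - lam * t / 2)" using pA[of 0] pA[of 1] by simp
  finally show ?thesis unfolding K_def .
qed

lemma phi_decay:
  assumes anti: "antimono (phi_mix M X)" and sm: "summable (\<lambda>n. sqrt (phi_mix M X (Suc n)))"
    and g: "g \<ge> 1"
  shows "phi_mix M X g \<le> (PhiS M X)\<^sup>2 / (real g)\<^sup>2"
proof -
  have "real g * sqrt (phi_mix M X g) = (\<Sum>d<g. sqrt (phi_mix M X g))" by simp
  also have "\<dots> \<le> (\<Sum>d<g. sqrt (phi_mix M X (Suc d)))"
  proof (rule sum_mono)
    fix d assume "d \<in> {..<g}"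
    then have "Suc d \<le> g" by simp
    then have "phi_mix M X g \<le> phi_mix M X (Suc d)" using anti by (auto simp: antimono_def)
    then show "sqrt (phi_mix M X g) \<le> sqrt (phi_mix M X (Suc d))" by simp
  qed
  also have "\<dots> \<le> PhiS M X" unfolding PhiS_def
    by (rule sum_le_suminf[OF sm]) (use phi_mix_01 in auto)
  finally have h: "real g * sqrt (phi_mix M X g) \<le> PhiS M X" .
  have "(real g * sqrt (phi_mix M X g))\<^sup>2 \<le> (PhiS M X)\<^sup>2"
    using h g phi_mix_01(1)[of g] by (intro power_mono) auto
  then have "(real g)\<^sup>2 * phi_mix M X g \<le> (PhiS M X)\<^sup>2"
    using phi_mix_01[of g] by (simp add: power_mult_distrib)
  then show ?thesis using g by (simp add: field_simps)
qed

end



lemma ln_over_powr: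
  assumes a: "0 < a" shows "((\<lambda>n::nat. ln (real n) / real n powr a) \<longlongrightarrow> 0) sequentially"
proof -
  have ln: "filterlim (\<lambda>n::nat. ln (real n)) at_top sequentially"
    by (rule filterlim_compose[OF ln_at_top filterlim_real_sequentially])
  have u: "filterlim (\<lambda>n::nat. a * ln (real n)) at_top sequentially"
    by (rule filterlim_tendsto_pos_mult_at_top[OF tendsto_const a ln])
  have e: "((\<lambda>x::real. x / exp x) \<longlongrightarrow> 0) at_top" using tendsto_power_div_exp_0[of 1] by simp
  have "((\<lambda>n::nat. a * ln (real n) / exp (a * ln (real n))) \<longlongrightarrow> 0) sequentially"
    by (rule filterlim_compose[OF e u])
  then have t: "((\<lambda>n::nat. (1/a) * (a * ln (real n) / exp (a * ln (real n)))) \<longlongrightarrow> (1/a) * 0) sequentially"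
    by (intro tendsto_mult tendsto_const)
  have ev: "eventually (\<lambda>n. (1/a) * (a * ln (real n) / exp (a * ln (real n))) = ln (real n) / real n powr a) sequentially"
    using eventually_ge_at_top[of 1] by eventually_elim (use a in \<open>simp add: powr_def\<close>)
  show ?thesis using tendsto_cong[OF ev] t by simp
qed

lemma sqrt_ln_over_powr:
  "0 < a \<Longrightarrow> ((\<lambda>n::nat. sqrt (ln (real n) / real n powr a)) \<longlongrightarrow> 0) sequentially"
  using tendsto_real_sqrt[OF ln_over_powr] by simp

lemma lim3: "((\<lambda>n::nat. sqrt (ln (real n)) / sqrt (real n)) \<longlongrightarrow> 0) sequentially"
proof -
  have ev: "eventually (\<lambda>n::nat. sqrt (ln (real n) / real n powr 1) = sqrt (ln (real n)) / sqrt (real n)) sequentially"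
    using eventually_ge_at_top[of 1] by eventually_elim (simp add: real_sqrt_divide)
  show ?thesis using tendsto_cong[OF ev] sqrt_ln_over_powr[of 1] by simp
qed

lemma P_facts:
  fixes x :: real assumes x: "1 \<le> x"
  defines "P \<equiv> x powr (1/6)"
  shows "0 < P" "1 \<le> P" "P * P = x powr (1/3)" "P * P * P = sqrt x" "P * P * P * P = x powr (2/3)"
proof -
  show "0 < P" unfolding P_def using x by simp
  show "1 \<le> P" unfolding P_def using x by (intro ge_one_powr_ge_zero) auto
  show "P * P = x powr (1/3)" unfolding P_def by (simp add: powr_add[symmetric])
  show "P * P * P = sqrt x" unfolding P_def using x
    by (simp add: powr_add[symmetric] powr_half_sqrt[symmetric])
  show "P * P * P * P = x powr (2/3)" unfolding P_def by (simp add: powr_add[symmetric])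
qed

lemma lim2: "((\<lambda>n::nat. sqrt (real n) * sqrt (ln (real n)) / real n powr (2/3)) \<longlongrightarrow> 0) sequentially"
proof -
  have ev: "eventually (\<lambda>n::nat. sqrt (ln (real n) / real n powr (1/3)) = sqrt (real n) * sqrt (ln (real n)) / real n powr (2/3)) sequentially"
    using eventually_ge_at_top[of 1]
  proof eventually_elim
    case (elim n)
    define P where "P = real n powr (1/6)"
    have x: "1 \<le> real n" using elim by simp
    note f = P_facts[OF x, folded P_def]
    have "sqrt (ln (real n) / real n powr (1/3)) = sqrt (ln (real n)) / P"
      unfolding f(3)[symmetric] using f(1) by (simp add: real_sqrt_divide real_sqrt_mult)
    also have "\<dots> = sqrt (real n) * sqrt (ln (real n)) / real n powr (2/3)"
      unfolding f(4)[symmetric] f(5)[symmetric] using f(1) by (simp add: field_simps)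
    finally show ?case .
  qed
  show ?thesis using tendsto_cong[OF ev] sqrt_ln_over_powr[of "1/3"] by simp
qed

lemma lim1: "((\<lambda>n::nat. sqrt (ln (real n)) / sqrt (real n) * (real n powr (1/3) + 1)) \<longlongrightarrow> 0) sequentially"
proof (rule tendsto_sandwich)
  show "eventually (\<lambda>n. 0 \<le> sqrt (ln (real n)) / sqrt (real n) * (real n powr (1/3) + 1)) sequentially"
    using eventually_ge_at_top[of 1] by eventually_elim simp
  show "eventually (\<lambda>n. sqrt (ln (real n)) / sqrt (real n) * (real n powr (1/3) + 1)
      \<le> 2 * sqrt (ln (real n) / real n powr (1/3))) sequentially"
    using eventually_ge_at_top[of 1]
  proof eventually_elim
    case (elim n)
    define P where "P = real n powr (1/6)"
    have x: "1 \<le> real n" using elim by simp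
    note f = P_facts[OF x, folded P_def]
    have s0: "0 \<le> sqrt (ln (real n))" using x by simp
    have pp: "1 \<le> P * P" using mult_mono[of 1 P 1 P] f(2) by simp
    have "(P * P + 1) / (P * P * P) \<le> (2 * (P * P)) / (P * P * P)"
      using pp f(1) by (intro divide_right_mono) auto
    also have "\<dots> = 2 / P" using f(1) by (simp add: field_simps)
    finally have q: "(P * P + 1) / (P * P * P) \<le> 2 / P" .
    have "sqrt (ln (real n)) / sqrt (real n) * (real n powr (1/3) + 1) = sqrt (ln (real n)) * ((P * P + 1) / (P * P * P))"
      unfolding f(3)[symmetric] f(4)[symmetric] by simp
    also have "\<dots> \<le> sqrt (ln (real n)) * (2 / P)" using q s0 by (rule mult_left_mono)
    also have "\<dots> = 2 * sqrt (ln (real n) / real n powr (1/3))"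
      unfolding f(3)[symmetric] using f(1) by (simp add: real_sqrt_divide real_sqrt_mult)
    finally show ?case .
  qed
  show "((\<lambda>n. 0) \<longlongrightarrow> (0::real)) sequentially" by simp
  show "((\<lambda>n::nat. 2 * sqrt (ln (real n) / real n powr (1/3))) \<longlongrightarrow> 0) sequentially"
    using tendsto_mult[OF tendsto_const sqrt_ln_over_powr[of "1/3"], of 2] by simp
qed


lemma ev_small:
  assumes "(f \<longlongrightarrow> 0) sequentially" "0 < (c::real)"
  shows "eventually (\<lambda>n. c * f n \<le> 1) sequentially"
proof -
  have "((\<lambda>n. c * f n) \<longlongrightarrow> c * 0) sequentially" by (intro tendsto_mult assms tendsto_const)
  then have "eventually (\<lambda>n. c * f n < 1) sequentially" by (intro order_tendstoD) auto
  then show ?thesis by eventually_elim auto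
qed

context mix begin

lemma bad_summable:
  fixes C :: real and xs qs :: "nat \<Rightarrow> real"
  assumes anti: "antimono (phi_mix M X)" and sm: "summable (\<lambda>n. sqrt (phi_mix M X (Suc n)))"
    and s: "\<bar>s\<bar> = 1" and hq: "\<And>n i. i \<ge> 1 \<Longrightarrow> prob (Ev (xs n) i) = qs n"
    and C: "0 < C" "32 * (1/4 + 2 * PhiS M X) \<le> C\<^sup>2"
  shows "summable (\<lambda>n. prob {\<omega>\<in>space M. C * sqrt (real n) * sqrt (ln (real n))
      \<le> (\<Sum>i\<in>{1..n}. Yv X s (xs n) (qs n) i \<omega>)})"
proof -
  define \<Phi> where "\<Phi> = PhiS M X"
  define v where "v = 1/4 + 2 * \<Phi>"
  have \<Phi>0: "0 \<le> \<Phi>" unfolding \<Phi>_def PhiS_def using sm phi_mix_01 by (intro suminf_nonneg) auto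
  have v0: "0 < v" unfolding v_def using \<Phi>0 by simp
  define \<theta> where "\<theta> = C / (4 * v)"
  have \<theta>0: "0 < \<theta>" unfolding \<theta>_def using C v0 by simp
  have c0: "0 < 6 * \<theta> * (\<Phi>\<^sup>2 + 1)" using \<theta>0 by (simp add: add_nonneg_pos)
  define lam where "lam n = \<theta> * sqrt (ln (real n)) / sqrt (real n)" for n :: nat
  define g where "g n = nat \<lceil>real n powr (1/3)\<rceil>" for n :: nat
  have ev: "eventually (\<lambda>n. prob {\<omega>\<in>space M. C * sqrt (real n) * sqrt (ln (real n))
      \<le> (\<Sum>i\<in>{1..n}. Yv X s (xs n) (qs n) i \<omega>)} \<le> 2 * exp 1 * inverse (real n ^ 2)) sequentially"
    using ev_small[OF lim1 \<theta>0] ev_small[OF lim2 c0] eventually_ge_at_top[of 3]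
  proof eventually_elim
    case (elim n)
    let ?P = "prob {\<omega>\<in>space M. C * sqrt (real n) * sqrt (ln (real n)) \<le> (\<Sum>i\<in>{1..n}. Yv X s (xs n) (qs n) i \<omega>)}"
    define L where "L = ln (real n)"
    define R where "R = sqrt (real n)"
    have n3: "real n \<ge> 3" using elim by simp
    have L0: "0 < L" unfolding L_def using n3 by simp
    have R0: "0 < R" unfolding R_def using n3 by simp
    have sL: "sqrt L * sqrt L = L" using L0 by simp
    have sR: "R * R = real n" unfolding R_def by simp
    have np: "0 < real n powr (1/3)" using n3 by simp
    have gl: "real n powr (1/3) \<le> real (g n)" unfolding g_def by linarith
    have gu: "real (g n) \<le> real n powr (1/3) + 1"
    proof -
      have "real (g n) = of_int \<lceil>real n powr (1/3)\<rceil>" unfolding g_def using np by simp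
      also have "\<dots> \<le> real n powr (1/3) + 1" by (rule of_int_ceiling_le_add_one)
      finally show ?thesis .
    qed
    have g1: "g n \<ge> 1" using gl np by linarith
    have lam0: "0 < lam n" unfolding lam_def using \<theta>0 L0 R0 by (simp add: L_def[symmetric] R_def[symmetric])
    have lamg: "lam n * real (g n) \<le> 1"
    proof -
      have "lam n * real (g n) \<le> lam n * (real n powr (1/3) + 1)" using lam0 gu by (intro mult_left_mono) auto
      also have "\<dots> = \<theta> * (sqrt (ln (real n)) / sqrt (real n) * (real n powr (1/3) + 1))"
        unfolding lam_def by simp
      finally show ?thesis using elim(1) by linarith
    qed
    have phig: "phi_mix M X (g n) \<le> \<Phi>\<^sup>2 / real n powr (2/3)"
    proof -
      have "phi_mix M X (g n) \<le> \<Phi>\<^sup>2 / (real (g n))\<^sup>2" unfolding \<Phi>_def by (rule phi_decay[OF anti sm g1])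
      also have "\<dots> \<le> \<Phi>\<^sup>2 / (real n powr (1/3))\<^sup>2"
        using gl np g1 by (intro divide_left_mono power_mono mult_pos_pos) auto
      also have "(real n powr (1/3))\<^sup>2 = real n powr (2/3)"
        using n3 by (simp add: powr_powr[symmetric] power2_eq_square powr_add[symmetric])
      finally show ?thesis .
    qed
    have err: "6 * real n * lam n * phi_mix M X (g n) \<le> 1"
    proof -
      have "6 * real n * lam n * phi_mix M X (g n) \<le> 6 * real n * lam n * (\<Phi>\<^sup>2 / real n powr (2/3))"
        using phig lam0 n3 by (intro mult_left_mono) auto
      also have "\<dots> \<le> 6 * real n * lam n * ((\<Phi>\<^sup>2 + 1) / real n powr (2/3))"
        using lam0 n3 by (intro mult_left_mono divide_right_mono) auto
      also have "\<dots> = 6 * \<theta> * (\<Phi>\<^sup>2 + 1) * (sqrt (real n) * sqrt (ln (real n)) / real n powr (2/3))"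
      proof -
        have nl: "real n * lam n = \<theta> * (R * sqrt L)"
          unfolding lam_def L_def[symmetric] R_def[symmetric]
          by (subst sR[symmetric]) (use R0 in \<open>simp add: field_simps\<close>)
        have "6 * real n * lam n * ((\<Phi>\<^sup>2 + 1) / real n powr (2/3)) = 6 * (real n * lam n) * ((\<Phi>\<^sup>2 + 1) / real n powr (2/3))"
          by simp
        also have "\<dots> = 6 * \<theta> * (\<Phi>\<^sup>2 + 1) * (R * sqrt L / real n powr (2/3))"
          unfolding nl by simp
        finally show ?thesis unfolding R_def L_def .
      qed
      finally show ?thesis using elim(2) by linarith
    qed
    have tl: "?P \<le> 2 * exp (real n * ((lam n)\<^sup>2 * v + 6 * lam n * phi_mix M X (g n))
        - lam n * (C * sqrt (real n) * sqrt (ln (real n))) / 2)"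
      unfolding v_def \<Phi>_def
      by (rule tail[OF g1 lam0 lamg s]) (use hq sm in auto)
    have e1: "real n * (lam n)\<^sup>2 * v = \<theta>\<^sup>2 * v * L"
      unfolding lam_def L_def[symmetric] R_def[symmetric] using R0 sL sR n3
      by (simp add: field_simps power2_eq_square)
    have e2: "lam n * (C * sqrt (real n) * sqrt (ln (real n))) / 2 = \<theta> * C * L / 2"
      unfolding lam_def L_def[symmetric] R_def[symmetric] using R0 sL
      by (simp add: field_simps)
    have e3: "\<theta> * C / 2 - \<theta>\<^sup>2 * v = C\<^sup>2 / (16 * v)"
      unfolding \<theta>_def using v0 by (simp add: field_simps power2_eq_square)
    have e4: "2 \<le> C\<^sup>2 / (16 * v)" using C(2) v0 unfolding v_def \<Phi>_def by (simp add: field_simps)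
    have "real n * ((lam n)\<^sup>2 * v + 6 * lam n * phi_mix M X (g n)) - lam n * (C * sqrt (real n) * sqrt (ln (real n))) / 2
        = real n * (lam n)\<^sup>2 * v + 6 * real n * lam n * phi_mix M X (g n) - \<theta> * C * L / 2"
      unfolding e2[symmetric] by (simp add: algebra_simps)
    also have "\<dots> \<le> \<theta>\<^sup>2 * v * L + 1 - \<theta> * C * L / 2" using e1 err by linarith
    also have "\<dots> = 1 - L * (\<theta> * C / 2 - \<theta>\<^sup>2 * v)" by (simp add: algebra_simps)
    also have "\<dots> \<le> 1 - L * 2"
    proof -
      have "L * 2 \<le> L * (C\<^sup>2 / (16 * v))" using e4 L0 by (intro mult_left_mono) auto
      then show ?thesis unfolding e3 by linarith
    qed
    finally have ex: "real n * ((lam n)\<^sup>2 * v + 6 * lam n * phi_mix M X (g n)) - lam n * (C * sqrt (real n) * sqrt (ln (real n))) / 2 \<le> 1 - 2 * L"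
      by simp
    have "?P \<le> 2 * exp (1 - 2 * L)" using tl ex by (meson exp_le_cancel_iff mult_left_mono order.trans zero_le_numeral)
    also have "exp (1 - 2 * L) = exp 1 * inverse (real n ^ 2)"
    proof -
      have eL: "exp L = real n" unfolding L_def using n3 by simp
      have "exp (2 * L) = exp (L + L)" by (simp only: mult_2)
      also have "\<dots> = exp L * exp L" by (rule exp_add)
      also have "\<dots> = real n ^ 2" unfolding eL by (simp only: power2_eq_square)
      finally have "exp (2 * L) = real n ^ 2" .
      moreover have "exp (1 - 2 * L) = exp 1 / exp (2 * L)" by (rule exp_diff)
      ultimately show ?thesis by (simp only: divide_inverse)
    qed
    finally show ?case by simp
  qed
  show ?thesis
  proof (rule summable_comparison_test_ev)
    show "eventually (\<lambda>n. norm (prob {\<omega>\<in>space M. C * sqrt (real n) * sqrt (ln (real n))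
      \<le> (\<Sum>i\<in>{1..n}. Yv X s (xs n) (qs n) i \<omega>)}) \<le> 2 * exp 1 * inverse (real n ^ 2)) sequentially"
      using ev by eventually_elim simp
    show "summable (\<lambda>n. 2 * exp 1 * inverse (real n ^ 2))"
      by (intro summable_mult inverse_power_summable) auto
  qed
qed

end


lemma emp_sum: "n \<ge> 1 \<Longrightarrow> (\<Sum>i=1..n. if X i \<omega> \<le> x then 1 else 0) = real n * emp_df X n \<omega> x"
  unfolding emp_df_def by simp

lemma emp_mono: "x \<le> y \<Longrightarrow> emp_df X n \<omega> x \<le> emp_df X n \<omega> y"
  unfolding emp_df_def by (intro mult_left_mono sum_mono) auto

lemma emp_bdd:
  assumes n: "n \<ge> 1" and p: "0 < p"
  shows "bdd_below {x. p \<le> emp_df X n \<omega> x}"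
proof (rule bdd_belowI)
  fix x assume x: "x \<in> {x. p \<le> emp_df X n \<omega> x}"
  show "Min ((\<lambda>i. X i \<omega>) ` {1..n}) \<le> x"
  proof (rule ccontr)
    assume "\<not> Min ((\<lambda>i. X i \<omega>) ` {1..n}) \<le> x"
    then have "\<forall>i\<in>{1..n}. \<not> X i \<omega> \<le> x" by (auto simp: Min_le_iff)
    then have "emp_df X n \<omega> x = 0" unfolding emp_df_def by simp
    then show False using x p by simp
  qed
qed

lemma emp_ne:
  assumes n: "n \<ge> 1" and p: "p \<le> 1"
  shows "{x. p \<le> emp_df X n \<omega> x} \<noteq> {}"
proof -
  let ?m = "Max ((\<lambda>i. X i \<omega>) ` {1..n})"
  have "\<forall>i\<in>{1..n}. X i \<omega> \<le> ?m" by auto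
  then have "emp_df X n \<omega> ?m = 1" unfolding emp_df_def using n by simp
  then have "?m \<in> {x. p \<le> emp_df X n \<omega> x}" using p by simp
  then show ?thesis by blast
qed

lemma emp_q_le:
  assumes "n \<ge> 1" "0 < p" "p \<le> emp_df X n \<omega> y"
  shows "quantile (emp_df X n \<omega>) p \<le> y"
  unfolding quantile_def using assms emp_bdd by (intro cInf_lower) auto

lemma emp_q_ge:
  assumes "n \<ge> 1" "0 < p" "p \<le> 1" "quantile (emp_df X n \<omega>) p < y"
  shows "p \<le> emp_df X n \<omega> y"
proof -
  have ne: "{x. p \<le> emp_df X n \<omega> x} \<noteq> {}" by (rule emp_ne[OF assms(1,3)])
  have bd: "bdd_below {x. p \<le> emp_df X n \<omega> x}" by (rule emp_bdd[OF assms(1,2)])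
  obtain z where "p \<le> emp_df X n \<omega> z" "z < y"
    using assms(4) unfolding quantile_def cInf_less_iff[OF ne bd] by auto
  then show ?thesis using emp_mono[of z y X n \<omega>] by linarith
qed

lemma sumY: "(\<Sum>i\<in>{1..n}. Yv X s x q i \<omega>) = s * ((\<Sum>i=1..n. if X i \<omega> \<le> x then 1 else 0) - real n * q)"
  unfolding Yv_def by (simp add: sum_distrib_left[symmetric] sum_subtractf)


lemma half_lt: "(a::real) < b + (c - b) / 2 \<Longrightarrow> b < c \<Longrightarrow> a < c" by argo
lemma half_gt: "(b::real) - (b - c) / 2 < a \<Longrightarrow> c < b \<Longrightarrow> c < a" by argo
lemma cancel_aux: "(a::real) \<noteq> 0 \<Longrightarrow> b \<noteq> 0 \<Longrightarrow> r \<noteq> 0 \<Longrightarrow> (a * c / b) * (b * s / (a * r)) = c * s / r"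
  by (simp add: field_simps)

context mix begin

lemma F_props:
  assumes hF: "\<And>i x. i \<ge> 1 \<Longrightarrow> prob {\<omega>\<in>space M. X i \<omega> \<le> x} = F x" and p: "0 < p" "p < 1"
  shows "\<And>x y. x \<le> y \<Longrightarrow> F x \<le> F y" "\<exists>x. p < F x" "\<exists>y. F y < p"
proof -
  define D where "D = distr M borel (X 1)"
  have X1: "X 1 \<in> borel_measurable M" using Xm by simp
  have RD: "real_distribution D" unfolding D_def using X1 by simp
  have cdfF: "cdf D x = F x" for x
  proof -
    have "cdf D x = measure D {..x}" by (simp add: cdf_def)
    also have "\<dots> = prob (X 1 -` {..x} \<inter> space M)" unfolding D_def using X1 by (simp add: measure_distr)
    also have "X 1 -` {..x} \<inter> space M = {\<omega>\<in>space M. X 1 \<omega> \<le> x}" by auto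
    finally show ?thesis using hF[of 1 x] by simp
  qed
  show "F x \<le> F y" if "x \<le> y" for x y
    using finite_borel_measure.cdf_nondecreasing[OF real_distribution.finite_borel_measure_M[OF RD] that]
    unfolding cdfF .
  have "(cdf D \<longlongrightarrow> 1) at_top" by (rule real_distribution.cdf_lim_at_top_prob[OF RD])
  then have "eventually (\<lambda>x. p < cdf D x) at_top" using p by (intro order_tendstoD) auto
  then show "\<exists>x. p < F x" unfolding cdfF eventually_at_top_linorder by auto
  have "(cdf D \<longlongrightarrow> 0) at_bot"
    by (rule finite_borel_measure.cdf_lim_at_bot[OF real_distribution.finite_borel_measure_M[OF RD]])
  then have "eventually (\<lambda>x. cdf D x < p) at_bot" using p by (intro order_tendstoD) auto
  then show "\<exists>y. F y < p" unfolding cdfF eventually_at_bot_linorder by auto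
qed

end

theorem lemma3p3:
  fixes M :: "'a measure" and X :: "nat \<Rightarrow> 'a \<Rightarrow> real"
    and F f f' :: "real \<Rightarrow> real" and p :: real
  assumes "prob_space M"
    and "\<And>i. i \<ge> 1 \<Longrightarrow> X i \<in> borel_measurable M"
    and "\<And>i x. i \<ge> 1 \<Longrightarrow> measure M {\<omega> \<in> space M. X i \<omega> \<le> x} = F x"
    and "0 < p" "p < 1"
    and "phi_mixing M X"
    and "summable (\<lambda>n. sqrt (phi_mix M X (Suc n)))"
    and "\<exists>e>0. \<exists>K. \<forall>x. \<bar>x - quantile F p\<bar> < e \<longrightarrow>
            (F has_real_derivative f x) (at x) \<and> (f has_real_derivative f' x) (at x) \<and> \<bar>f' x\<bar> \<le> K"
    and "f (quantile F p) > 0"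
  shows "\<forall>\<delta>>0. AE \<omega> in M. eventually (\<lambda>n.
      \<bar>quantile (emp_df X n \<omega>) p - quantile F p\<bar>
        \<le> (2 * sqrt (4 * (1 + 4 * (\<Sum>n. sqrt (phi_mix M X (Suc n))))) + \<delta>) * sqrt (ln (real n))
           / (f (quantile F p) * sqrt (real n))) sequentially"
proof (intro allI impI)
  fix \<delta> :: real assume \<delta>: "\<delta> > 0"
  interpret mix M X by (intro mix.intro mix_axioms.intro assms(1) assms(2))
  note hF = assms(3)
  note sm = assms(7)
  have anti: "antimono (phi_mix M X)" using assms(6) unfolding phi_mixing_def by simp
  have hq: "\<And>x i. i \<ge> 1 \<Longrightarrow> prob (Ev x i) = F x" unfolding Ev_def using hF by simp
  define \<xi> where "\<xi> = quantile F p"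
  define \<Phi> where "\<Phi> = (\<Sum>n. sqrt (phi_mix M X (Suc n)))"
  have \<Phi>P: "\<Phi> = PhiS M X" unfolding \<Phi>_def PhiS_def ..
  define C where "C = 2 * sqrt (4 * (1 + 4 * \<Phi>))"
  define f0 where "f0 = f \<xi>"
  have f0: "f0 > 0" using assms(9) unfolding f0_def \<xi>_def .
  have \<Phi>0: "0 \<le> \<Phi>" unfolding \<Phi>_def using sm phi_mix_01 by (intro suminf_nonneg) auto
  have C0: "C > 0" unfolding C_def using \<Phi>0 by simp
  have C2: "C\<^sup>2 = 16 * (1 + 4 * \<Phi>)" unfolding C_def using \<Phi>0 by (simp add: power_mult_distrib)
  have Cbig: "32 * (1/4 + 2 * PhiS M X) \<le> C\<^sup>2" using C2 \<Phi>P \<Phi>0 by simp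
  obtain e K where e: "e > 0" and hd: "\<forall>x. \<bar>x - \<xi>\<bar> < e \<longrightarrow>
      (F has_real_derivative f x) (at x) \<and> (f has_real_derivative f' x) (at x) \<and> \<bar>f' x\<bar> \<le> K"
    using assms(8) unfolding \<xi>_def by blast
  have D: "(F has_real_derivative f0) (at \<xi>)" using hd e unfolding f0_def by auto
  define \<eta> where "\<eta> = f0 * \<delta> / (C + \<delta>)"
  define f1 where "f1 = f0 - \<eta>"
  have \<eta>0: "0 < \<eta>" unfolding \<eta>_def using f0 \<delta> C0 by simp
  have f1eq: "f1 = f0 * C / (C + \<delta>)" unfolding f1_def \<eta>_def using C0 \<delta> by (simp add: field_simps)
  have f10: "0 < f1" unfolding f1eq using f0 C0 \<delta> by simp
  have "((\<lambda>h. (F (\<xi> + h) - F \<xi>) / h) \<midarrow>0\<rightarrow> f0)" using D by (simp add: DERIV_def)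
  from LIM_D[OF this \<eta>0] obtain d where d: "d > 0"
    and dd: "\<And>h. h \<noteq> 0 \<Longrightarrow> \<bar>h\<bar> < d \<Longrightarrow> \<bar>(F (\<xi> + h) - F \<xi>) / h - f0\<bar> < \<eta>"
    by auto
  have up: "F \<xi> + f1 * h < F (\<xi> + h) \<and> F (\<xi> + h) < F \<xi> + (f0 + \<eta>) * h" if h: "0 < h" "h < d" for h
  proof -
    define r where "r = (F (\<xi> + h) - F \<xi>) / h"
    have "\<bar>r - f0\<bar> < \<eta>" unfolding r_def using dd[of h] h by auto
    then have "f1 < r" "r < f0 + \<eta>" unfolding f1_def by auto
    then have "f1 * h < r * h" "r * h < (f0 + \<eta>) * h" using h by (auto intro: mult_strict_right_mono)
    moreover have "r * h = F (\<xi> + h) - F \<xi>" unfolding r_def using h by simp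
    ultimately show ?thesis by linarith
  qed
  have dn: "F (\<xi> - h) < F \<xi> - f1 * h \<and> F \<xi> - (f0 + \<eta>) * h < F (\<xi> - h)" if h: "0 < h" "h < d" for h
  proof -
    define r where "r = (F (\<xi> + - h) - F \<xi>) / (- h)"
    have "\<bar>r - f0\<bar> < \<eta>" unfolding r_def using dd[of "-h"] h by auto
    then have "f1 < r" "r < f0 + \<eta>" unfolding f1_def by auto
    then have "f1 * h < r * h" "r * h < (f0 + \<eta>) * h" using h by (auto intro: mult_strict_right_mono)
    moreover have "r * h = F \<xi> - F (\<xi> - h)" unfolding r_def using h by (simp add: field_simps)
    ultimately show ?thesis by linarith
  qed
  have Fmono: "\<And>x y. x \<le> y \<Longrightarrow> F x \<le> F y" and xt: "\<exists>x. p < F x" and yb: "\<exists>y. F y < p"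
    using F_props[OF hF assms(4,5)] by auto
  define S where "S = {x. p \<le> F x}"
  have Sne: "S \<noteq> {}"
  proof -
    obtain x where "p < F x" using xt by blast
    then have "x \<in> S" unfolding S_def by simp
    then show ?thesis by blast
  qed
  obtain y0 where y0: "F y0 < p" using yb by blast
  have Sbdd: "bdd_below S"
  proof (rule bdd_belowI[of _ y0])
    fix x assume "x \<in> S"
    then have "p \<le> F x" unfolding S_def by simp
    then show "y0 \<le> x" using Fmono[of x y0] y0 by force
  qed
  have \<xi>S: "\<xi> = Inf S" unfolding \<xi>_def quantile_def S_def ..
  have Fge: "p \<le> F \<xi>"
  proof (rule ccontr)
    assume "\<not> p \<le> F \<xi>"
    then have lt: "F \<xi> < p" by simp
    define h where "h = min (d/2) ((p - F \<xi>) / (2 * (f0 + \<eta>)))"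
    have h0: "0 < h" "h < d" unfolding h_def using d lt f0 \<eta>0 by auto
    have "(f0 + \<eta>) * h \<le> (f0 + \<eta>) * ((p - F \<xi>) / (2 * (f0 + \<eta>)))"
      unfolding h_def using f0 \<eta>0 by (intro mult_left_mono) auto
    also have "\<dots> = (p - F \<xi>) / 2" using f0 \<eta>0 by (simp add: field_simps)
    finally have hh: "(f0 + \<eta>) * h \<le> (p - F \<xi>) / 2" .
    have "F (\<xi> + h) < F \<xi> + (f0 + \<eta>) * h" using up[OF h0] by blast
    also have "\<dots> \<le> F \<xi> + (p - F \<xi>) / 2" using hh by simp
    finally have "F (\<xi> + h) < p" using lt by (rule half_lt)
    then have "\<xi> + h \<le> x" if "x \<in> S" for x
      using that Fmono[of x "\<xi> + h"] unfolding S_def by force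
    then have "\<xi> + h \<le> Inf S" using Sne by (intro cInf_greatest) auto
    then show False using \<xi>S h0 by simp
  qed
  have Fle: "F \<xi> \<le> p"
  proof (rule ccontr)
    assume "\<not> F \<xi> \<le> p"
    then have gt: "p < F \<xi>" by simp
    define h where "h = min (d/2) ((F \<xi> - p) / (2 * (f0 + \<eta>)))"
    have h0: "0 < h" "h < d" unfolding h_def using d gt f0 \<eta>0 by auto
    have "(f0 + \<eta>) * h \<le> (f0 + \<eta>) * ((F \<xi> - p) / (2 * (f0 + \<eta>)))"
      unfolding h_def using f0 \<eta>0 by (intro mult_left_mono) auto
    also have "\<dots> = (F \<xi> - p) / 2" using f0 \<eta>0 by (simp add: field_simps)
    finally have hh: "(f0 + \<eta>) * h \<le> (F \<xi> - p) / 2" .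
    have "F \<xi> - (F \<xi> - p) / 2 \<le> F \<xi> - (f0 + \<eta>) * h" using hh by simp
    also have "\<dots> < F (\<xi> - h)" using dn[OF h0] by blast
    finally have "p < F (\<xi> - h)" using gt by (rule half_gt)
    then have "\<xi> - h \<in> S" unfolding S_def by simp
    then have "Inf S \<le> \<xi> - h" using Sbdd by (intro cInf_lower)
    then show False using \<xi>S h0 by simp
  qed
  have F\<xi>: "F \<xi> = p" using Fge Fle by simp
  define \<epsilon> where "\<epsilon> n = (C + \<delta>) * sqrt (ln (real n)) / (f0 * sqrt (real n))" for n :: nat
  define T where "T n = C * sqrt (real n) * sqrt (ln (real n))" for n :: nat
  have key: "real n * (f1 * \<epsilon> n) = T n" if "n \<ge> 2" for n
  proof -
    define R where "R = sqrt (real n)"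
    have R0: "R > 0" unfolding R_def using that by simp
    have sR: "real n = R * R" unfolding R_def by simp
    have "f1 * \<epsilon> n = C * sqrt (ln (real n)) / R"
      unfolding f1eq \<epsilon>_def R_def[symmetric] using f0 C0 \<delta> R0 by (intro cancel_aux) auto
    then show ?thesis unfolding T_def R_def[symmetric] sR using R0 by (simp add: field_simps)
  qed
  have \<epsilon>pos: "0 < \<epsilon> n" if "n \<ge> 2" for n
  proof -
    have "0 < ln (real n)" using that by simp
    then show ?thesis unfolding \<epsilon>_def using C0 \<delta> f0 that by (simp add: divide_pos_pos)
  qed
  have \<epsilon>lim: "(\<epsilon> \<longlongrightarrow> 0) sequentially"
  proof -
    have "((\<lambda>n. (C + \<delta>) / f0 * (sqrt (ln (real n)) / sqrt (real n))) \<longlongrightarrow> (C + \<delta>) / f0 * 0) sequentially"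
      by (intro tendsto_mult tendsto_const lim3)
    moreover have "(\<lambda>n. (C + \<delta>) / f0 * (sqrt (ln (real n)) / sqrt (real n))) = \<epsilon>"
      unfolding \<epsilon>_def by (auto simp: fun_eq_iff)
    ultimately show ?thesis by simp
  qed
  have \<epsilon>d: "eventually (\<lambda>n. \<epsilon> n < d) sequentially" using \<epsilon>lim d by (intro order_tendstoD) auto
  define Ap where "Ap n = {\<omega>\<in>space M. C * sqrt (real n) * sqrt (ln (real n))
      \<le> (\<Sum>i\<in>{1..n}. Yv X (-1) (\<xi> + \<epsilon> n) (F (\<xi> + \<epsilon> n)) i \<omega>)}" for n
  define Am where "Am n = {\<omega>\<in>space M. C * sqrt (real n) * sqrt (ln (real n))
      \<le> (\<Sum>i\<in>{1..n}. Yv X 1 (\<xi> - \<epsilon> n) (F (\<xi> - \<epsilon> n)) i \<omega>)}" for n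
  have measY: "(\<lambda>\<omega>. \<Sum>i\<in>{1..n}. Yv X s x q i \<omega>) \<in> borel_measurable M" for n s x q
    by (rule U_M) auto
  have ApM: "Ap n \<in> sets M" for n
  proof -
    have [measurable]: "(\<lambda>\<omega>. \<Sum>i\<in>{1..n}. Yv X (-1) (\<xi> + \<epsilon> n) (F (\<xi> + \<epsilon> n)) i \<omega>) \<in> borel_measurable M"
      by (rule U_M) auto
    show ?thesis unfolding Ap_def by measurable
  qed
  have AmM: "Am n \<in> sets M" for n
  proof -
    have [measurable]: "(\<lambda>\<omega>. \<Sum>i\<in>{1..n}. Yv X 1 (\<xi> - \<epsilon> n) (F (\<xi> - \<epsilon> n)) i \<omega>) \<in> borel_measurable M"
      by (rule U_M) auto
    show ?thesis unfolding Am_def by measurable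
  qed
  have sumAp: "summable (\<lambda>n. prob (Ap n))"
    unfolding Ap_def by (rule bad_summable[OF anti sm _ _ C0 Cbig]) (use hq in auto)
  have sumAm: "summable (\<lambda>n. prob (Am n))"
    unfolding Am_def by (rule bad_summable[OF anti sm _ _ C0 Cbig]) (use hq in auto)
  have AE1: "AE \<omega> in M. eventually (\<lambda>n. \<omega> \<in> space M - Ap n) sequentially"
    by (rule borel_cantelli_AE1[OF ApM _ sumAp]) (simp add: emeasure_eq_measure)
  have AE2: "AE \<omega> in M. eventually (\<lambda>n. \<omega> \<in> space M - Am n) sequentially"
    by (rule borel_cantelli_AE1[OF AmM _ sumAm]) (simp add: emeasure_eq_measure)
  have RHS: "(2 * sqrt (4 * (1 + 4 * (\<Sum>n. sqrt (phi_mix M X (Suc n))))) + \<delta>) * sqrt (ln (real n))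
           / (f (quantile F p) * sqrt (real n)) = \<epsilon> n" for n
    unfolding \<epsilon>_def C_def \<Phi>_def f0_def \<xi>_def ..
  have RHS2: "(2 * sqrt (4 * (1 + 4 * (\<Sum>n. sqrt (phi_mix M X (Suc n))))) + \<delta>) * sqrt (ln (real n))
           / (f \<xi> * sqrt (real n)) = \<epsilon> n" for n
    unfolding \<epsilon>_def C_def \<Phi>_def f0_def ..
  show "AE \<omega> in M. eventually (\<lambda>n.
      \<bar>quantile (emp_df X n \<omega>) p - quantile F p\<bar>
        \<le> (2 * sqrt (4 * (1 + 4 * (\<Sum>n. sqrt (phi_mix M X (Suc n))))) + \<delta>) * sqrt (ln (real n))
           / (f (quantile F p) * sqrt (real n))) sequentially"
    unfolding RHS \<xi>_def[symmetric]
    using AE1 AE2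
  proof eventually_elim
    case (elim \<omega>)
    show ?case
      using elim(1) elim(2) \<epsilon>d eventually_ge_at_top[of 2]
    proof eventually_elim
      case (elim n)
      then have \<omega>: "\<omega> \<in> space M" and nAp: "\<omega> \<notin> Ap n" and nAm: "\<omega> \<notin> Am n"
        and \<epsilon>dn: "\<epsilon> n < d" and n2: "n \<ge> 2" by auto
      have n1: "n \<ge> 1" using n2 by simp
      have e0: "0 < \<epsilon> n" using \<epsilon>pos[OF n2] .
      have npos: "0 < real n" using n2 by simp
      let ?q = "quantile (emp_df X n \<omega>) p"
      let ?I = "\<lambda>x. (\<Sum>i=1..n. if X i \<omega> \<le> x then 1 else (0::real))"
      have c1: "\<not> ?q > \<xi> + \<epsilon> n"
      proof
        assume gt: "?q > \<xi> + \<epsilon> n"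
        have "\<not> p \<le> emp_df X n \<omega> (\<xi> + \<epsilon> n)"
          using emp_q_le[OF n1 assms(4), of X \<omega> "\<xi> + \<epsilon> n"] gt by linarith
        then have "?I (\<xi> + \<epsilon> n) < real n * p" using emp_sum[OF n1, of X \<omega> "\<xi> + \<epsilon> n"] npos by simp
        moreover have "f1 * \<epsilon> n < F (\<xi> + \<epsilon> n) - p" using up[OF e0 \<epsilon>dn] F\<xi> by linarith
        then have "real n * (f1 * \<epsilon> n) \<le> real n * (F (\<xi> + \<epsilon> n) - p)" using npos by simp
        ultimately have "T n \<le> (\<Sum>i\<in>{1..n}. Yv X (-1) (\<xi> + \<epsilon> n) (F (\<xi> + \<epsilon> n)) i \<omega>)"
          unfolding sumY key[OF n2, symmetric] by (simp add: algebra_simps)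
        then have "\<omega> \<in> Ap n" unfolding Ap_def T_def using \<omega> by simp
        then show False using nAp by simp
      qed
      have c2: "\<not> ?q < \<xi> - \<epsilon> n"
      proof
        assume lt: "?q < \<xi> - \<epsilon> n"
        have "p \<le> emp_df X n \<omega> (\<xi> - \<epsilon> n)"
          by (rule emp_q_ge[OF n1 assms(4)]) (use lt assms(5) in auto)
        then have "real n * p \<le> ?I (\<xi> - \<epsilon> n)" using emp_sum[OF n1, of X \<omega> "\<xi> - \<epsilon> n"] npos by simp
        moreover have "f1 * \<epsilon> n < p - F (\<xi> - \<epsilon> n)" using dn[OF e0 \<epsilon>dn] F\<xi> by linarith
        then have "real n * (f1 * \<epsilon> n) \<le> real n * (p - F (\<xi> - \<epsilon> n))" using npos by simp
        ultimately have "T n \<le> (\<Sum>i\<in>{1..n}. Yv X 1 (\<xi> - \<epsilon> n) (F (\<xi> - \<epsilon> n)) i \<omega>)"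
          unfolding sumY key[OF n2, symmetric] by (simp add: algebra_simps)
        then have "\<omega> \<in> Am n" unfolding Am_def T_def using \<omega> by simp
        then show False using nAm by simp
      qed
      have "\<bar>?q - \<xi>\<bar> \<le> \<epsilon> n" using c1 c2 by linarith
      then show ?case unfolding RHS2 .
    qed
  qed
qed


end
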